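(* Let $X=(X,d,\mu)$ be a class A space and let $\xi$ be a filter on $X$ finer than the Fréchet filter. For $T\in\mathscr{E}(X)$ the following are equivalent: (i) $T\in\mathscr{J}_{\mathrm{co}(\xi)}(X)$; (ii) $\lim_{x\to\xi}\|T\mathbf{1}_{B_x(r)}\|=0$ for all $r>0$; (iii) $\lim_{x\to\xi}\|\mathbf{1}_{B_x(r)}T\|=0$ for all $r>0$.
   Context: Let $(X,d)$ be a non-compact proper metric space (closed balls $B_x(r)=\{y:d(x,y)\le r\}$ compact) and $\mu$ a Radon measure on $X$ with support $X$, with $\mu(B_x(r))>0$ and $\sup_x\mu(B_x(r))<\infty$ for all $r>0$. $L^2(X)=L^2(X,\mu)$; $\mathbf{1}_A$ is multiplication by the characteristic function of a measurable $A$. A kernel $k$ on $X\times X$ is controlled if $k(x,y)=0$ whenever $d(x,y)>r$ for some $r$. $\mathscr{E}(X)$ is the norm closure of the operators $(Op(k)f)(x)=\int k(x,y)f(y)d\mu(y)$ with $k$ bounded, uniformly continuous and controlled. Property A: for every $\varepsilon,r>0$ there is a Borel map $\phi:X\to L^2(X)$ with $\|\phi(x)\|=1$, $\mathrm{supp}\,\phi(x)\subset B_x(s)$ for some $s$ independent of $x$, and $\|\phi(x)-\phi(y)\|<\varepsilon$ if $d(x,y)<r$. A class A space is such an $(X,d,\mu)$ which moreover satisfies $\inf_x\mu(B_x(1/2))>0$ and has Property A. Filters: the Fréchet filter consists of the sets with relatively compact complement. $\lim_{x\to\xi}f(x)=0$ means $\{x:|f(x)|<\varepsilon\}\in\xi$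 for each $\varepsilon>0$. For $F\subset X$, $F^{(r)}=\{x:\inf_{y\notin F}d(x,y)>r\}$; $\mathrm{co}(\xi)=\{F\subset X:F^{(r)}\in\xi\ \forall r>0\}$ (the largest filter $\eta\subset\xi$ such that $F\in\eta\Rightarrow F^{(r)}\in\eta$ for all $r>0$). For such a filter $\eta$, $\mathscr{J}_\eta(X)=\{T\in\mathscr{E}(X):\inf_F\|\mathbf{1}_FT\|=0\}$, infimum over measurable $F\in\eta$. *)

theory Defs
  imports "HOL-Analysis.Analysis"
begin

section \<open>The Hilbert space L^2(X,mu) (complex scalars), via representatives\<close>

definition sq_int :: "'a measure \<Rightarrow> ('a \<Rightarrow> complex) \<Rightarrow> bool" where
  "sq_int M f \<longleftrightarrow> f \<in> borel_measurable M \<and> integrable M (\<lambda>x. (cmod (f x))\<^sup>2)"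

definition l2norm :: "'a measure \<Rightarrow> ('a \<Rightarrow> complex) \<Rightarrow> real" where
  "l2norm M f = sqrt (\<integral>x. (cmod (f x))\<^sup>2 \<partial>M)"

definition l2_open :: "'a measure \<Rightarrow> ('a \<Rightarrow> complex) set \<Rightarrow> bool" where
  "l2_open M U \<longleftrightarrow> (\<forall>f\<in>U. sq_int M f \<longrightarrow>
      (\<exists>e>0. \<forall>g. sq_int M g \<and> l2norm M (\<lambda>x. g x - f x) < e \<longrightarrow> g \<in> U))"

definition l2_borel_map :: "'a measure \<Rightarrow> ('b::topological_space \<Rightarrow> 'a \<Rightarrow> complex) \<Rightarrow> bool" where
  "l2_borel_map M \<phi> \<longleftrightarrow> (\<forall>x. sq_int M (\<phi> x)) \<and>
      (\<forall>U. l2_open M U \<longrightarrow> {x. \<phi> x \<in> U} \<in> sets borel)"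

type_synonym 'a op = "('a \<Rightarrow> complex) \<Rightarrow> ('a \<Rightarrow> complex)"

definition bounded_op :: "'a measure \<Rightarrow> 'a op \<Rightarrow> bool" where
  "bounded_op M T \<longleftrightarrow>
     (\<forall>f. sq_int M f \<longrightarrow> sq_int M (T f)) \<and>
     (\<forall>f g c. sq_int M f \<and> sq_int M g \<longrightarrow>
        (AE x in M. T (\<lambda>y. c * f y + g y) x = c * T f x + T g x)) \<and>
     (\<exists>C. \<forall>f. sq_int M f \<longrightarrow> l2norm M (T f) \<le> C * l2norm M f)"

definition opnorm :: "'a measure \<Rightarrow> 'a op \<Rightarrow> real" where
  "opnorm M T = Sup {l2norm M (T f) | f. sq_int M f \<and> l2norm M f \<le> 1}"

definition mult_ind :: "'a set \<Rightarrow> 'a op" where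
  "mult_ind A f = (\<lambda>x. indicator A x * f x)"

definition Op :: "'a measure \<Rightarrow> ('a \<Rightarrow> 'a \<Rightarrow> complex) \<Rightarrow> 'a op" where
  "Op M k f = (\<lambda>x. \<integral>y. k x y * f y \<partial>M)"

definition good_kernel :: "('a::metric_space \<Rightarrow> 'a \<Rightarrow> complex) \<Rightarrow> bool" where
  "good_kernel k \<longleftrightarrow>
     bounded (range (\<lambda>p. k (fst p) (snd p))) \<and>
     uniformly_continuous_on UNIV (\<lambda>p. k (fst p) (snd p)) \<and>
     (\<exists>r. \<forall>x y. dist x y > r \<longrightarrow> k x y = 0)"

text \<open>E(X): the operator-norm closure (in B(L^2)) of the Op(k), k bounded, uniformly
  continuous and controlled.\<close>
definition in_E :: "'a::metric_space measure \<Rightarrow> 'a op \<Rightarrow> bool" where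
  "in_E M T \<longleftrightarrow> bounded_op M T \<and>
     (\<forall>e>0. \<exists>k. good_kernel k \<and> opnorm M (\<lambda>f x. T f x - Op M k f x) < e)"

definition property_A :: "'a::metric_space measure \<Rightarrow> bool" where
  "property_A M \<longleftrightarrow> (\<forall>e>0. \<forall>r>0. \<exists>\<phi> :: 'a \<Rightarrow> 'a \<Rightarrow> complex.
      l2_borel_map M \<phi> \<and>
      (\<forall>x. l2norm M (\<phi> x) = 1) \<and>
      (\<exists>s. \<forall>x. AE y in M. y \<notin> cball x s \<longrightarrow> \<phi> x y = 0) \<and>
      (\<forall>x y. dist x y < r \<longrightarrow> l2norm M (\<lambda>z. \<phi> x z - \<phi> y z) < e))"

text \<open>The standing hypotheses: X (= UNIV of the type) non-compact proper metric space, M a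
  Radon (Borel, locally finite) measure with full support, positive and uniformly bounded
  measure of balls; class A adds uniformly positive measure of 1/2-balls and property A.\<close>
definition class_A :: "'a::metric_space measure \<Rightarrow> bool" where
  "class_A M \<longleftrightarrow>
     \<not> compact (UNIV :: 'a set) \<and>
     (\<forall>(x::'a) r. compact (cball x r)) \<and>
     sets M = sets borel \<and>
     (\<forall>K. compact K \<longrightarrow> emeasure M K < \<infinity>) \<and>
     (\<forall>U. open U \<and> U \<noteq> {} \<longrightarrow> emeasure M U > 0) \<and>
     (\<forall>x r. r > 0 \<longrightarrow> emeasure M (cball x r) > 0) \<and>
     (\<forall>r>0. \<exists>C::real. \<forall>x. emeasure M (cball x r) \<le> ennreal C) \<and>
     (\<exists>c>0. \<forall>x. emeasure M (cball x (1/2)) \<ge> ennreal c) \<and>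
     property_A M"

definition finer_than_frechet :: "'a::metric_space filter \<Rightarrow> bool" where
  "finer_than_frechet \<xi> \<longleftrightarrow> (\<forall>F. compact (closure (- F)) \<longrightarrow> eventually (\<lambda>x. x \<in> F) \<xi>)"

text \<open>F^(r) = {x. inf_{y not in F} d(x,y) > r}  (inf over the empty set = +infinity).\<close>
definition inner_set :: "real \<Rightarrow> 'a::metric_space set \<Rightarrow> 'a set" where
  "inner_set r F = {x. \<exists>\<delta>>r. \<forall>y. y \<notin> F \<longrightarrow> dist x y \<ge> \<delta>}"

definition co_filter :: "'a::metric_space filter \<Rightarrow> 'a set set" where
  "co_filter \<xi> = {F. \<forall>r>0. eventually (\<lambda>x. x \<in> inner_set r F) \<xi>}"

definition J_ideal :: "'a::metric_space measure \<Rightarrow> 'a set set \<Rightarrow> 'a op set" where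
  "J_ideal M \<eta> = {T. in_E M T \<and>
      (INF F \<in> {F \<in> \<eta>. F \<in> sets M}. opnorm M (\<lambda>f. mult_ind F (T f))) = 0}"

end

theory Submission
  imports Defs
begin


lemma sq_sum_le: "(a + b)\<^sup>2 \<le> 2 * a\<^sup>2 + 2 * (b::real)\<^sup>2"
proof -
  have "0 \<le> (a - b)\<^sup>2" by simp
  then show ?thesis unfolding power2_sum power2_diff by linarith
qed

lemma abs_prod_le: "\<bar>a * b\<bar> \<le> a\<^sup>2 + (b::real)\<^sup>2"
proof -
  have "0 \<le> (\<bar>a\<bar> - \<bar>b\<bar>)\<^sup>2" by simp
  then have "2 * (\<bar>a\<bar> * \<bar>b\<bar>) \<le> a\<^sup>2 + b\<^sup>2" unfolding power2_diff by simp
  moreover have "0 \<le> \<bar>a\<bar> * \<bar>b\<bar>" by simp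
  ultimately have "\<bar>a\<bar> * \<bar>b\<bar> \<le> a\<^sup>2 + b\<^sup>2" by linarith
  then show ?thesis by (simp add: abs_mult)
qed

lemma prod_le_sq: "a * b \<le> a\<^sup>2 + (b::real)\<^sup>2"
  using abs_prod_le[of a b] by linarith

lemma sq_int_meas: "sq_int M f \<Longrightarrow> f \<in> borel_measurable M"
  by (simp add: sq_int_def)

lemma sq_int_iff_nn:
  "sq_int M f \<longleftrightarrow> f \<in> borel_measurable M \<and> (\<integral>\<^sup>+x. ennreal ((cmod (f x))\<^sup>2) \<partial>M) < \<infinity>"
proof
  assume "sq_int M f"
  then show "f \<in> borel_measurable M \<and> (\<integral>\<^sup>+x. ennreal ((cmod (f x))\<^sup>2) \<partial>M) < \<infinity>"
  proof -
    have a: "f \<in> borel_measurable M" "integrable M (\<lambda>x. (cmod (f x))\<^sup>2)"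
      using \<open>sq_int M f\<close> unfolding sq_int_def by auto
    have "(\<integral>\<^sup>+x. ennreal (norm ((cmod (f x))\<^sup>2)) \<partial>M) < \<infinity>"
      using a(2) unfolding integrable_iff_bounded by blast
    then show ?thesis using a(1) by simp
  qed
next
  assume a: "f \<in> borel_measurable M \<and> (\<integral>\<^sup>+x. ennreal ((cmod (f x))\<^sup>2) \<partial>M) < \<infinity>"
  have [measurable]: "f \<in> borel_measurable M" using a by simp
  have "(\<lambda>x. (cmod (f x))\<^sup>2) \<in> borel_measurable M" by measurable
  with a show "sq_int M f" unfolding sq_int_def integrable_iff_bounded by simp
qed

lemma l2norm_nonneg[simp]: "0 \<le> l2norm M f"
  unfolding l2norm_def by (simp add: integral_nonneg)

lemma l2norm_sq: "(l2norm M f)\<^sup>2 = (\<integral>x. (cmod (f x))\<^sup>2 \<partial>M)"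
  unfolding l2norm_def by (simp add: integral_nonneg)

lemma l2norm_nn: "sq_int M f \<Longrightarrow> ennreal ((l2norm M f)\<^sup>2) = (\<integral>\<^sup>+x. ennreal ((cmod (f x))\<^sup>2) \<partial>M)"
  unfolding l2norm_sq sq_int_def
  by (subst nn_integral_eq_integral) auto

lemma sq_int_nnI:
  assumes "f \<in> borel_measurable M" "(\<integral>\<^sup>+x. ennreal ((cmod (f x))\<^sup>2) \<partial>M) \<le> ennreal c" "0 \<le> c"
  shows "sq_int M f" "(l2norm M f)\<^sup>2 \<le> c"
proof -
  have "(\<integral>\<^sup>+x. ennreal ((cmod (f x))\<^sup>2) \<partial>M) < \<infinity>"
    using le_less_trans[OF assms(2) ennreal_less_top] by simp
  then show 1: "sq_int M f" using assms(1) sq_int_iff_nn by blast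
  have "ennreal ((l2norm M f)\<^sup>2) \<le> ennreal c" using l2norm_nn[OF 1] assms(2) by simp
  then show "(l2norm M f)\<^sup>2 \<le> c" using assms(3) by (simp add: ennreal_le_iff)
qed

lemma sq_int_bound:
  assumes "sq_int M g" "f \<in> borel_measurable M" "\<And>x. cmod (f x) \<le> cmod (g x)"
  shows "sq_int M f"
proof -
  have "integrable M (\<lambda>x. (cmod (g x))\<^sup>2)" using assms(1) by (simp add: sq_int_def)
  moreover have "(\<lambda>x. (cmod (f x))\<^sup>2) \<in> borel_measurable M" using assms(2) by measurable
  ultimately have "integrable M (\<lambda>x. (cmod (f x))\<^sup>2)"
    by (rule Bochner_Integration.integrable_bound) (auto intro!: power_mono assms(3))
  then show ?thesis using assms(2) by (simp add: sq_int_def)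
qed

lemma l2norm_mono:
  assumes "sq_int M g" "f \<in> borel_measurable M" "\<And>x. cmod (f x) \<le> cmod (g x)"
  shows "l2norm M f \<le> l2norm M g"
proof -
  have f: "sq_int M f" by (rule sq_int_bound[OF assms])
  have "(\<integral>x. (cmod (f x))\<^sup>2 \<partial>M) \<le> (\<integral>x. (cmod (g x))\<^sup>2 \<partial>M)"
    using f assms by (intro integral_mono) (auto simp: sq_int_def intro!: power_mono)
  then show ?thesis unfolding l2norm_def by simp
qed

lemma sq_int_zero[simp]: "sq_int M (\<lambda>x. 0)"
  by (simp add: sq_int_def)

lemma l2norm_zero[simp]: "l2norm M (\<lambda>x. 0) = 0"
  by (simp add: l2norm_def)

lemma sq_int_add:
  assumes "sq_int M f" "sq_int M g" shows "sq_int M (\<lambda>x. f x + g x)"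
proof -
  have m: "f \<in> borel_measurable M" "g \<in> borel_measurable M" using assms by (auto simp: sq_int_def)
  have i: "integrable M (\<lambda>x. 2 * (cmod (f x))\<^sup>2 + 2 * (cmod (g x))\<^sup>2)"
    using assms by (auto simp: sq_int_def)
  have "(\<lambda>x. (cmod (f x + g x))\<^sup>2) \<in> borel_measurable M" using m by measurable
  moreover have "\<And>x. (cmod (f x + g x))\<^sup>2 \<le> 2 * (cmod (f x))\<^sup>2 + 2 * (cmod (g x))\<^sup>2"
  proof -
    fix x
    have "cmod (f x + g x) \<le> cmod (f x) + cmod (g x)" by (rule norm_triangle_ineq)
    then have "(cmod (f x + g x))\<^sup>2 \<le> (cmod (f x) + cmod (g x))\<^sup>2" by (simp add: power_mono)
    also have "\<dots> \<le> 2 * (cmod (f x))\<^sup>2 + 2 * (cmod (g x))\<^sup>2"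
      by (rule sq_sum_le)
    finally show "(cmod (f x + g x))\<^sup>2 \<le> 2 * (cmod (f x))\<^sup>2 + 2 * (cmod (g x))\<^sup>2" .
  qed
  ultimately have "integrable M (\<lambda>x. (cmod (f x + g x))\<^sup>2)"
    by (intro Bochner_Integration.integrable_bound[OF i]) auto
  then show ?thesis using m by (simp add: sq_int_def)
qed

lemma sq_int_cmult:
  assumes "sq_int M f" shows "sq_int M (\<lambda>x. c * f x)"
proof -
  have "integrable M (\<lambda>x. (cmod c)\<^sup>2 * (cmod (f x))\<^sup>2)" using assms by (auto simp: sq_int_def)
  moreover have "(\<lambda>x. c * f x) \<in> borel_measurable M" using assms by (auto simp: sq_int_def)
  ultimately show ?thesis by (simp add: sq_int_def norm_mult power_mult_distrib)
qed

lemma sq_int_uminus: "sq_int M f \<Longrightarrow> sq_int M (\<lambda>x. - f x)"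
  using sq_int_cmult[of M f "-1"] by simp

lemma sq_int_diff:
  assumes "sq_int M f" "sq_int M g" shows "sq_int M (\<lambda>x. f x - g x)"
  using sq_int_add[OF assms(1) sq_int_uminus[OF assms(2)]] by simp

lemma l2norm_cmult: "l2norm M (\<lambda>x. c * f x) = cmod c * l2norm M f"
  unfolding l2norm_def by (simp add: norm_mult power_mult_distrib real_sqrt_mult)

lemma l2norm_uminus: "l2norm M (\<lambda>x. - f x) = l2norm M f"
  unfolding l2norm_def by simp

lemma l2norm_AE_cong:
  assumes "f \<in> borel_measurable M" "g \<in> borel_measurable M" "AE x in M. f x = g x"
  shows "l2norm M f = l2norm M g"
proof -
  have "(\<integral>x. (cmod (f x))\<^sup>2 \<partial>M) = (\<integral>x. (cmod (g x))\<^sup>2 \<partial>M)"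
    using assms by (intro integral_cong_AE) auto
  then show ?thesis by (simp add: l2norm_def)
qed

lemma CS_real:
  assumes "sq_int M f" "sq_int M g"
  shows "integrable M (\<lambda>x. cmod (f x) * cmod (g x))"
    "(\<integral>x. cmod (f x) * cmod (g x) \<partial>M) \<le> l2norm M f * l2norm M g"
proof -
  have m[measurable]: "f \<in> borel_measurable M" "g \<in> borel_measurable M" using assms by (auto simp: sq_int_def)
  have i: "integrable M (\<lambda>x. (cmod (f x))\<^sup>2 + (cmod (g x))\<^sup>2)"
    using assms by (auto simp: sq_int_def)
  show ii: "integrable M (\<lambda>x. cmod (f x) * cmod (g x))"
  proof (rule Bochner_Integration.integrable_bound[OF i])
    show "(\<lambda>x. cmod (f x) * cmod (g x)) \<in> borel_measurable M" by measurable
    show "AE x in M. norm (cmod (f x) * cmod (g x)) \<le> norm ((cmod (f x))\<^sup>2 + (cmod (g x))\<^sup>2)"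
      by (intro AE_I2) (simp add: prod_le_sq)
  qed
  have "ennreal (\<integral>x. cmod (f x) * cmod (g x) \<partial>M) = (\<integral>\<^sup>+x. ennreal (cmod (f x)) * ennreal (cmod (g x)) \<partial>M)"
    using ii by (subst nn_integral_eq_integral[symmetric]) (auto simp: ennreal_mult)
  then have "(ennreal (\<integral>x. cmod (f x) * cmod (g x) \<partial>M))\<^sup>2 \<le>
     (\<integral>\<^sup>+x. (ennreal (cmod (f x)))\<^sup>2 \<partial>M) * (\<integral>\<^sup>+x. (ennreal (cmod (g x)))\<^sup>2 \<partial>M)"
    by (simp add: Cauchy_Schwarz_nn_integral)
  also have "\<dots> = ennreal ((l2norm M f)\<^sup>2) * ennreal ((l2norm M g)\<^sup>2)"
    using l2norm_nn[OF assms(1)] l2norm_nn[OF assms(2)] by (simp add: ennreal_power)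
  finally have "ennreal ((\<integral>x. cmod (f x) * cmod (g x) \<partial>M)\<^sup>2) \<le> ennreal ((l2norm M f * l2norm M g)\<^sup>2)"
    by (simp add: ennreal_power ennreal_mult'[symmetric] power_mult_distrib integral_nonneg)
  then have "(\<integral>x. cmod (f x) * cmod (g x) \<partial>M)\<^sup>2 \<le> (l2norm M f * l2norm M g)\<^sup>2"
    by (subst (asm) ennreal_le_iff) auto
  then show "(\<integral>x. cmod (f x) * cmod (g x) \<partial>M) \<le> l2norm M f * l2norm M g"
    by (rule power2_le_imp_le) simp
qed

lemma l2norm_triangle:
  assumes "sq_int M f" "sq_int M g"
  shows "l2norm M (\<lambda>x. f x + g x) \<le> l2norm M f + l2norm M g"
proof -
  have fg: "sq_int M (\<lambda>x. f x + g x)" using sq_int_add[OF assms] .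
  note cs = CS_real[OF assms]
  have "(\<integral>x. (cmod (f x + g x))\<^sup>2 \<partial>M) \<le> (\<integral>x. (cmod (f x))\<^sup>2 + 2 * (cmod (f x) * cmod (g x)) + (cmod (g x))\<^sup>2 \<partial>M)"
  proof (rule integral_mono)
    show "integrable M (\<lambda>x. (cmod (f x + g x))\<^sup>2)" using fg by (simp add: sq_int_def)
    show "integrable M (\<lambda>x. (cmod (f x))\<^sup>2 + 2 * (cmod (f x) * cmod (g x)) + (cmod (g x))\<^sup>2)"
      using assms cs(1) by (auto simp: sq_int_def)
    fix x
    have "cmod (f x + g x) \<le> cmod (f x) + cmod (g x)" by (rule norm_triangle_ineq)
    then have "(cmod (f x + g x))\<^sup>2 \<le> (cmod (f x) + cmod (g x))\<^sup>2" by (simp add: power_mono)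
    then show "(cmod (f x + g x))\<^sup>2 \<le> (cmod (f x))\<^sup>2 + 2 * (cmod (f x) * cmod (g x)) + (cmod (g x))\<^sup>2"
      by (simp add: power2_sum)
  qed
  also have "\<dots> = (l2norm M f)\<^sup>2 + 2 * (\<integral>x. cmod (f x) * cmod (g x) \<partial>M) + (l2norm M g)\<^sup>2"
    using assms cs(1) by (simp add: sq_int_def l2norm_sq)
  also have "\<dots> \<le> (l2norm M f)\<^sup>2 + 2 * (l2norm M f * l2norm M g) + (l2norm M g)\<^sup>2"
    using cs(2) by simp
  also have "\<dots> = (l2norm M f + l2norm M g)\<^sup>2" by (simp add: power2_sum)
  finally have "(l2norm M (\<lambda>x. f x + g x))\<^sup>2 \<le> (l2norm M f + l2norm M g)\<^sup>2" by (simp add: l2norm_sq)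
  then show ?thesis by (rule power2_le_imp_le) simp
qed

lemma l2norm_triangle_diff:
  assumes "sq_int M f" "sq_int M g"
  shows "l2norm M (\<lambda>x. f x - g x) \<le> l2norm M f + l2norm M g"
  using l2norm_triangle[OF assms(1) sq_int_uminus[OF assms(2)]] by (simp add: l2norm_uminus)

lemma l2norm_rev_triangle:
  assumes "sq_int M f" "sq_int M g"
  shows "\<bar>l2norm M f - l2norm M g\<bar> \<le> l2norm M (\<lambda>x. f x - g x)"
proof -
  have d: "sq_int M (\<lambda>x. f x - g x)" "sq_int M (\<lambda>x. g x - f x)" using sq_int_diff assms by auto
  have "l2norm M f \<le> l2norm M (\<lambda>x. f x - g x) + l2norm M g"
    using l2norm_triangle[OF d(1) assms(2)] by simp
  moreover have "l2norm M g \<le> l2norm M (\<lambda>x. g x - f x) + l2norm M f"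
    using l2norm_triangle[OF d(2) assms(1)] by simp
  moreover have "l2norm M (\<lambda>x. g x - f x) = l2norm M (\<lambda>x. f x - g x)"
    using l2norm_uminus[of M "\<lambda>x. f x - g x"] by simp
  ultimately show ?thesis by linarith
qed

lemma mult_ind_meas:
  assumes [measurable]: "A \<in> sets M" "f \<in> borel_measurable M" shows "mult_ind A f \<in> borel_measurable M"
  unfolding mult_ind_def by measurable

lemma cmod_mult_ind_le: "cmod (mult_ind A f x) \<le> cmod (f x)"
  unfolding mult_ind_def by (simp add: indicator_def norm_mult)

lemma sq_int_mult_ind: "A \<in> sets M \<Longrightarrow> sq_int M f \<Longrightarrow> sq_int M (mult_ind A f)"
  by (rule sq_int_bound[of M f]) (auto intro: mult_ind_meas sq_int_meas cmod_mult_ind_le)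

lemma l2norm_mult_ind_le: "A \<in> sets M \<Longrightarrow> sq_int M f \<Longrightarrow> l2norm M (mult_ind A f) \<le> l2norm M f"
  by (rule l2norm_mono) (auto intro: mult_ind_meas sq_int_meas cmod_mult_ind_le)


definition opb :: "'a measure \<Rightarrow> 'a op \<Rightarrow> real \<Rightarrow> bool" where
  "opb M A C \<longleftrightarrow> (\<forall>f. sq_int M f \<longrightarrow> l2norm M (A f) \<le> C * l2norm M f)"

abbreviation opset :: "'a measure \<Rightarrow> 'a op \<Rightarrow> real set" where
  "opset M A \<equiv> {l2norm M (A f) | f. sq_int M f \<and> l2norm M f \<le> 1}"

lemma opset_ne: "opset M A \<noteq> {}"
proof -
  have "l2norm M (A (\<lambda>x. 0)) \<in> opset M A" by (rule CollectI, rule exI[of _ "\<lambda>x. 0"]) simp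
  then show ?thesis by blast
qed

lemma opb_bdd: assumes "opb M A C" shows "bdd_above (opset M A)"
proof (rule bdd_aboveI)
  fix y assume "y \<in> opset M A"
  then obtain f where f: "sq_int M f" "l2norm M f \<le> 1" "y = l2norm M (A f)" by auto
  have "y \<le> C * l2norm M f" using assms f unfolding opb_def by auto
  also have "\<dots> \<le> \<bar>C\<bar> * l2norm M f" by (rule mult_right_mono) auto
  also have "\<dots> \<le> \<bar>C\<bar>" using f(2) by (simp add: mult_left_le)
  finally show "y \<le> \<bar>C\<bar>" .
qed

lemma opnorm_upper:
  assumes "bdd_above (opset M A)" "sq_int M f" "l2norm M f \<le> 1"
  shows "l2norm M (A f) \<le> opnorm M A"
  unfolding opnorm_def by (rule cSup_upper) (use assms in auto)

lemma opnorm_least: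
  assumes "\<And>f. sq_int M f \<Longrightarrow> l2norm M f \<le> 1 \<Longrightarrow> l2norm M (A f) \<le> c"
  shows "opnorm M A \<le> c"
  unfolding opnorm_def by (rule cSup_least) (use assms opset_ne[of M A] in auto)

lemma opnorm_nonneg:
  assumes "bdd_above (opset M A)" shows "0 \<le> opnorm M A"
proof -
  have "l2norm M (A (\<lambda>x. 0)) \<le> opnorm M A" by (rule opnorm_upper[OF assms]) auto
  then show ?thesis using l2norm_nonneg[of M "A (\<lambda>x. 0)"] by linarith
qed

lemma opnorm_homog:
  assumes bdd: "bdd_above (opset M A)"
    and hom: "\<And>f c. sq_int M f \<Longrightarrow> l2norm M (A (\<lambda>y. c * f y)) = cmod c * l2norm M (A f)"
    and f: "sq_int M f"
  shows "l2norm M (A f) \<le> opnorm M A * l2norm M f"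
proof (cases "l2norm M f = 0")
  case True
  show ?thesis
  proof (rule ccontr)
    assume "\<not> ?thesis"
    then have pos: "l2norm M (A f) > 0" using True by simp
    define c where "c = (opnorm M A + 1) / l2norm M (A f)"
    have c0: "c \<ge> 0" unfolding c_def using opnorm_nonneg[OF bdd] pos by simp
    have "sq_int M (\<lambda>y. complex_of_real c * f y)" by (rule sq_int_cmult[OF f])
    moreover have "l2norm M (\<lambda>y. complex_of_real c * f y) \<le> 1"
      using True by (simp add: l2norm_cmult)
    ultimately have "l2norm M (A (\<lambda>y. complex_of_real c * f y)) \<le> opnorm M A"
      by (rule opnorm_upper[OF bdd])
    also have "l2norm M (A (\<lambda>y. complex_of_real c * f y)) = c * l2norm M (A f)"
      using hom[OF f] c0 by simp
    also have "c * l2norm M (A f) = opnorm M A + 1" unfolding c_def using pos by simp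
    finally show False by simp
  qed
next
  case False
  then have pos: "l2norm M f > 0" using l2norm_nonneg[of M f] by linarith
  define c where "c = 1 / l2norm M f"
  have "sq_int M (\<lambda>y. complex_of_real c * f y)" by (rule sq_int_cmult[OF f])
  moreover have "l2norm M (\<lambda>y. complex_of_real c * f y) \<le> 1"
    unfolding l2norm_cmult c_def using pos by (simp add: norm_divide)
  ultimately have "l2norm M (A (\<lambda>y. complex_of_real c * f y)) \<le> opnorm M A"
    by (rule opnorm_upper[OF bdd])
  moreover have "l2norm M (A (\<lambda>y. complex_of_real c * f y)) = l2norm M (A f) / l2norm M f"
    unfolding hom[OF f] c_def using pos by (simp add: norm_divide)
  ultimately show ?thesis using pos by (simp add: divide_le_eq mult.commute)
qed

lemma bop_sq: "bounded_op M T \<Longrightarrow> sq_int M f \<Longrightarrow> sq_int M (T f)"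
  unfolding bounded_op_def by auto

lemma bop_opb: assumes "bounded_op M T" shows "\<exists>C\<ge>0. opb M T C"
proof -
  obtain C where C: "\<And>f. sq_int M f \<Longrightarrow> l2norm M (T f) \<le> C * l2norm M f"
    using assms unfolding bounded_op_def by blast
  have "opb M T (max C 0)" unfolding opb_def
  proof (intro allI impI)
    fix f assume "sq_int M f"
    then have "l2norm M (T f) \<le> C * l2norm M f" by (rule C)
    also have "\<dots> \<le> max C 0 * l2norm M f" by (intro mult_right_mono) auto
    finally show "l2norm M (T f) \<le> max C 0 * l2norm M f" .
  qed
  then show ?thesis by (intro exI[of _ "max C 0"]) auto
qed

lemma bop_lin: "bounded_op M T \<Longrightarrow> sq_int M f \<Longrightarrow> sq_int M g \<Longrightarrow>
   AE x in M. T (\<lambda>y. c * f y + g y) x = c * T f x + T g x"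
  unfolding bounded_op_def by blast

lemma bop_zero: assumes "bounded_op M T" shows "AE x in M. T (\<lambda>y. 0) x = 0"
proof -
  have "AE x in M. T (\<lambda>y. 1 * 0 + 0) x = 1 * T (\<lambda>y. 0) x + T (\<lambda>y. 0) x"
    by (rule bop_lin[OF assms]) auto
  then show ?thesis by auto
qed

lemma bop_hom: assumes "bounded_op M T" "sq_int M f"
  shows "AE x in M. T (\<lambda>y. c * f y) x = c * T f x"
proof -
  have "AE x in M. T (\<lambda>y. c * f y + 0) x = c * T f x + T (\<lambda>y. 0) x"
    by (rule bop_lin[OF assms(1,2)]) auto
  with bop_zero[OF assms(1)] show ?thesis by auto
qed

lemma bop_diff: assumes "bounded_op M T" "sq_int M f" "sq_int M g"
  shows "AE x in M. T (\<lambda>y. f y - g y) x = T f x - T g x"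
proof -
  have "AE x in M. T (\<lambda>y. (-1) * g y + f y) x = (-1) * T g x + T f x"
    by (rule bop_lin[OF assms(1,3,2)])
  moreover have "(\<lambda>y. (-1) * g y + f y) = (\<lambda>y. f y - g y)" by auto
  ultimately show ?thesis by auto
qed

lemma bop_l2hom: assumes "bounded_op M T" "sq_int M f"
  shows "l2norm M (T (\<lambda>y. c * f y)) = cmod c * l2norm M (T f)"
proof -
  have "l2norm M (T (\<lambda>y. c * f y)) = l2norm M (\<lambda>x. c * T f x)"
    using bop_sq[OF assms(1) sq_int_cmult[OF assms(2)]] bop_sq[OF assms] bop_hom[OF assms]
    by (intro l2norm_AE_cong) (auto simp: sq_int_def)
  then show ?thesis by (simp add: l2norm_cmult)
qed

lemma mult_ind_cmult: "mult_ind B (\<lambda>y. c * f y) = (\<lambda>y. c * mult_ind B f y)"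
  unfolding mult_ind_def by auto

lemma L_hom: assumes "bounded_op M T" "B \<in> sets M" "sq_int M f"
  shows "l2norm M (mult_ind B (T (\<lambda>y. c * f y))) = cmod c * l2norm M (mult_ind B (T f))"
proof -
  have m1: "T (\<lambda>y. c * f y) \<in> borel_measurable M"
    using bop_sq[OF assms(1) sq_int_cmult[OF assms(3)]] by (simp add: sq_int_def)
  have m2: "(\<lambda>x. c * T f x) \<in> borel_measurable M"
    using sq_int_cmult[OF bop_sq[OF assms(1,3)]] by (simp add: sq_int_def)
  have "l2norm M (mult_ind B (T (\<lambda>y. c * f y))) = l2norm M (mult_ind B (\<lambda>x. c * T f x))"
  proof (rule l2norm_AE_cong)
    show "mult_ind B (T (\<lambda>y. c * f y)) \<in> borel_measurable M" by (rule mult_ind_meas[OF assms(2) m1])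
    show "mult_ind B (\<lambda>x. c * T f x) \<in> borel_measurable M" by (rule mult_ind_meas[OF assms(2) m2])
    show "AE x in M. mult_ind B (T (\<lambda>y. c * f y)) x = mult_ind B (\<lambda>x. c * T f x) x"
      using bop_hom[OF assms(1,3), of c] by eventually_elim (simp add: mult_ind_def)
  qed
  then show ?thesis by (simp add: l2norm_cmult mult_ind_cmult)
qed

lemma L_opb: assumes "opb M T C" "C \<ge> 0" "B \<in> sets M" "bounded_op M T"
  shows "opb M (\<lambda>f. mult_ind B (T f)) C"
  unfolding opb_def
proof (intro allI impI)
  fix f assume f: "sq_int M f"
  have "l2norm M (mult_ind B (T f)) \<le> l2norm M (T f)"
    by (rule l2norm_mult_ind_le[OF assms(3) bop_sq[OF assms(4) f]])
  also have "\<dots> \<le> C * l2norm M f" using assms(1) f unfolding opb_def by auto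
  finally show "l2norm M (mult_ind B (T f)) \<le> C * l2norm M f" .
qed

lemma L_bdd: assumes "bounded_op M T" "B \<in> sets M"
  shows "bdd_above (opset M (\<lambda>f. mult_ind B (T f)))"
proof -
  obtain C where "C \<ge> 0" "opb M T C" using bop_opb[OF assms(1)] by blast
  then show ?thesis by (intro opb_bdd[OF L_opb[OF \<open>opb M T C\<close> \<open>C \<ge> 0\<close> assms(2,1)]])
qed

lemma L_bound: assumes "bounded_op M T" "B \<in> sets M" "sq_int M f"
  shows "l2norm M (mult_ind B (T f)) \<le> opnorm M (\<lambda>f. mult_ind B (T f)) * l2norm M f"
  by (rule opnorm_homog[OF L_bdd[OF assms(1,2)] L_hom[OF assms(1,2)] assms(3)])

lemma R_hom: assumes "bounded_op M T" "B \<in> sets M" "sq_int M f"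
  shows "l2norm M (T (mult_ind B (\<lambda>y. c * f y))) = cmod c * l2norm M (T (mult_ind B f))"
  unfolding mult_ind_cmult using bop_l2hom[OF assms(1) sq_int_mult_ind[OF assms(2,3)]] .

lemma R_opb: assumes "opb M T C" "C \<ge> 0" "B \<in> sets M"
  shows "opb M (\<lambda>f. T (mult_ind B f)) C"
  unfolding opb_def
proof (intro allI impI)
  fix f assume f: "sq_int M f"
  have "l2norm M (T (mult_ind B f)) \<le> C * l2norm M (mult_ind B f)"
    using assms(1) sq_int_mult_ind[OF assms(3) f] unfolding opb_def by auto
  also have "\<dots> \<le> C * l2norm M f"
    by (rule mult_left_mono[OF l2norm_mult_ind_le[OF assms(3) f] assms(2)])
  finally show "l2norm M (T (mult_ind B f)) \<le> C * l2norm M f" .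
qed

lemma R_bdd: assumes "bounded_op M T" "B \<in> sets M"
  shows "bdd_above (opset M (\<lambda>f. T (mult_ind B f)))"
proof -
  obtain C where "C \<ge> 0" "opb M T C" using bop_opb[OF assms(1)] by blast
  then show ?thesis by (intro opb_bdd[OF R_opb[OF \<open>opb M T C\<close> \<open>C \<ge> 0\<close> assms(2)]])
qed

lemma R_bound: assumes "bounded_op M T" "B \<in> sets M" "sq_int M f"
  shows "l2norm M (T (mult_ind B f)) \<le> opnorm M (\<lambda>f. T (mult_ind B f)) * l2norm M f"
  by (rule opnorm_homog[OF R_bdd[OF assms(1,2)] R_hom[OF assms(1,2)] assms(3)])

lemma L_mono: assumes "bounded_op M T" "A \<in> sets M" "B \<in> sets M" "A \<subseteq> B"
  shows "opnorm M (\<lambda>f. mult_ind A (T f)) \<le> opnorm M (\<lambda>f. mult_ind B (T f))"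
proof (rule opnorm_least)
  fix f assume f: "sq_int M f" "l2norm M f \<le> 1"
  have "l2norm M (mult_ind A (T f)) \<le> l2norm M (mult_ind B (T f))"
  proof (rule l2norm_mono)
    show "sq_int M (mult_ind B (T f))" by (rule sq_int_mult_ind[OF assms(3) bop_sq[OF assms(1) f(1)]])
    show "mult_ind A (T f) \<in> borel_measurable M"
      by (rule mult_ind_meas[OF assms(2) sq_int_meas[OF bop_sq[OF assms(1) f(1)]]])
    show "cmod (mult_ind A (T f) x) \<le> cmod (mult_ind B (T f) x)" for x
      using assms(4) by (auto simp: mult_ind_def indicator_def)
  qed
  also have "\<dots> \<le> opnorm M (\<lambda>f. mult_ind B (T f))"
    by (rule opnorm_upper[OF L_bdd[OF assms(1,3)] f])
  finally show "l2norm M (mult_ind A (T f)) \<le> opnorm M (\<lambda>f. mult_ind B (T f))" .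
qed


lemma ennreal_term_le_suminf: "(f::nat \<Rightarrow> ennreal) i \<le> (\<Sum>n. f n)"
  using sum_le_suminf[of f "{i}"] by simp

lemma countable_net:
  assumes hp: "\<And>(x::'a::metric_space) r. compact (cball x r)"
  shows "\<exists>D::'a set. countable D \<and> D \<noteq> {} \<and> (\<forall>x. \<exists>d\<in>D. dist x d < 1/2)"
proof -
  fix x0 :: 'a
  have "\<forall>n::nat. \<exists>k. finite k \<and> k \<subseteq> cball x0 (real n) \<and> cball x0 (real n) \<subseteq> (\<Union>x\<in>k. ball x (1/2))"
  proof
    fix n :: nat
    have "seq_compact (cball x0 (real n))" using hp compact_imp_seq_compact by blast
    from seq_compact_imp_totally_bounded[OF this]
    show "\<exists>k. finite k \<and> k \<subseteq> cball x0 (real n) \<and> cball x0 (real n) \<subseteq> (\<Union>x\<in>k. ball x (1/2))"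
      by (meson divide_pos_pos zero_less_numeral zero_less_one)
  qed
  from choice[OF this] obtain K where K0: "\<forall>n. finite (K n) \<and> K n \<subseteq> cball x0 (real n) \<and> cball x0 (real n) \<subseteq> (\<Union>x\<in>K n. ball x (1/2))"
    by blast
  have K: "\<And>n. finite (K n)" "\<And>n. cball x0 (real n) \<subseteq> (\<Union>x\<in>K n. ball x (1/2))"
    using K0 by auto
  define D where "D = insert x0 (\<Union>n. K n)"
  have "countable D" unfolding D_def using K(1) by (auto intro: countable_finite)
  moreover have "D \<noteq> {}" unfolding D_def by auto
  moreover have "\<exists>d\<in>D. dist x d < 1/2" for x
  proof -
    obtain n :: nat where "dist x0 x \<le> real n" using real_arch_simple by blast
    then have "x \<in> cball x0 (real n)" by simp
    then obtain d where "d \<in> K n" "x \<in> ball d (1/2)" using K(2) by blast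
    then show ?thesis unfolding D_def by (intro bexI[of _ d]) (auto simp: dist_commute)
  qed
  ultimately show ?thesis by blast
qed

lemma partition_exists:
  assumes hp: "\<And>(x::'a::metric_space) r. compact (cball x r)"
  shows "\<exists>(d::nat \<Rightarrow> 'a) (Q::nat \<Rightarrow> 'a set). disjoint_family Q \<and> (\<forall>y. \<exists>i. y \<in> Q i) \<and>
     (\<forall>i. Q i \<subseteq> ball (d i) (1/2)) \<and> (\<forall>i. Q i \<in> sets borel)"
proof -
  obtain D :: "'a set" where D: "countable D" "D \<noteq> {}" "\<And>x. \<exists>d\<in>D. dist x d < 1/2"
    using countable_net[OF hp] by blast
  define d where "d = from_nat_into D"
  have rD: "range d = D" unfolding d_def using D by simp
  define Q where "Q i = ball (d i) (1/2) - (\<Union>j<i. ball (d j) (1/2))" for i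
  have "disjoint_family Q"
    unfolding disjoint_family_on_def
  proof (intro ballI impI)
    fix i j :: nat assume "i \<noteq> j"
    then consider "i < j" | "j < i" by linarith
    then show "Q i \<inter> Q j = {}" unfolding Q_def by cases auto
  qed
  moreover have "\<exists>i. y \<in> Q i" for y
  proof -
    obtain e where "e \<in> D" "dist y e < 1/2" using D(3) by blast
    then obtain i where "dist y (d i) < 1/2" using rD by auto
    then have ex: "\<exists>i. y \<in> ball (d i) (1/2)" by (auto simp: dist_commute)
    define i0 where "i0 = (LEAST i. y \<in> ball (d i) (1/2))"
    have "y \<in> ball (d i0) (1/2)" unfolding i0_def using ex by (rule LeastI_ex)
    moreover have "\<And>j. j < i0 \<Longrightarrow> y \<notin> ball (d j) (1/2)" unfolding i0_def using not_less_Least by blast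
    ultimately show ?thesis unfolding Q_def by (intro exI[of _ i0]) auto
  qed
  moreover have "\<forall>i. Q i \<subseteq> ball (d i) (1/2)" unfolding Q_def by auto
  moreover have "\<forall>i. Q i \<in> sets borel" unfolding Q_def by auto
  ultimately show ?thesis by blast
qed

lemma cA_parts:
  fixes M :: "'a::metric_space measure"
  assumes "class_A M"
  shows "\<not> compact (UNIV :: 'a set)" "\<forall>(x::'a) r. compact (cball x r)" "sets M = sets borel"
    "\<forall>K. compact K \<longrightarrow> emeasure M K < \<infinity>"
    "\<forall>U. open U \<and> U \<noteq> {} \<longrightarrow> emeasure M U > 0"
    "\<forall>x r. r > 0 \<longrightarrow> emeasure M (cball x r) > 0"
    "\<forall>r>0. \<exists>C::real. \<forall>x. emeasure M (cball x r) \<le> ennreal C"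
    "\<exists>c>0. \<forall>x. emeasure M (cball x (1/2)) \<ge> ennreal c"
    "property_A M"
  using assms unfolding class_A_def apply -
  apply (elim conjE, assumption)+
  done

locale cA =
  fixes M :: "'a::metric_space measure"
  assumes cls: "class_A M"
begin

lemma sM: "sets M = sets borel" using cA_parts[OF cls] by blast

lemma spM[simp]: "space M = UNIV" using sets_eq_imp_space_eq[OF sM] by simp

lemma proper: "compact (cball (x::'a) r)" using cA_parts(2)[OF cls] by blast

lemma meas_M: "measurable M N = measurable borel N"
  by (rule measurable_cong_sets[OF sM refl])

lemma borel_M: "A \<in> sets borel \<Longrightarrow> A \<in> sets M" using sM by simp

lemma closed_M[intro]: "closed A \<Longrightarrow> A \<in> sets M" using sM by simp

lemma open_M[intro]: "open A \<Longrightarrow> A \<in> sets M" using sM by simp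

lemma cball_M[simp, measurable]: "cball x r \<in> sets M" by auto

lemma fin_compact: "compact K \<Longrightarrow> emeasure M K < \<infinity>" using cA_parts(4)[OF cls] by blast

lemma fin_cball: "emeasure M (cball x r) < \<infinity>" using fin_compact[OF proper] .

lemma unif_ball: assumes "r > 0" shows "\<exists>C\<ge>0. \<forall>x. emeasure M (cball x r) \<le> ennreal C"
proof -
  obtain C where "\<forall>x. emeasure M (cball x r) \<le> ennreal C" using cA_parts(7)[OF cls] assms by blast
  then show ?thesis
    by (intro exI[of _ "max C 0"]) (auto intro: order_trans ennreal_leI)
qed

lemma cont_meas: "continuous_on UNIV f \<Longrightarrow> f \<in> borel_measurable M"
  unfolding meas_M by (rule borel_measurable_continuous_onI)

lemma ball_integral:
  assumes "R > 0"
  shows "\<exists>C\<ge>0. \<forall>(g::'a \<Rightarrow> ennreal) (a::ennreal). g \<in> borel_measurable M \<longrightarrow>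
      (\<integral>\<^sup>+x. a * (\<integral>\<^sup>+y. indicator (cball x R) y * g y \<partial>M) \<partial>M) \<le> a * ennreal C * (\<integral>\<^sup>+y. g y \<partial>M)"
proof -
  obtain d :: "nat \<Rightarrow> 'a" and Q :: "nat \<Rightarrow> 'a set" where
    Q: "disjoint_family Q" "\<And>y. \<exists>i. y \<in> Q i" "\<And>i. Q i \<subseteq> ball (d i) (1/2)" "\<And>i. Q i \<in> sets borel"
  proof -
    obtain d :: "nat \<Rightarrow> 'a" and Q where "disjoint_family Q \<and> (\<forall>y. \<exists>i. y \<in> Q i) \<and>
     (\<forall>i. Q i \<subseteq> ball (d i) (1/2)) \<and> (\<forall>i. Q i \<in> sets borel)"
      using partition_exists[OF proper] by blast
    then show ?thesis using that by blast
  qed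
  have QM[measurable]: "Q i \<in> sets M" for i using Q(4) sM by simp
  obtain C where C: "C \<ge> 0" "\<And>x. emeasure M (cball x (R+1)) \<le> ennreal C"
    using unif_ball[of "R+1"] assms by auto
  have sumQ: "(\<Sum>i. indicator (Q i) y :: ennreal) = 1" for y
    using suminf_indicator[OF Q(1), of y] Q(2)[of y] by (auto simp: indicator_def)
  show ?thesis
  proof (intro exI[of _ C] conjI allI impI)
    show "C \<ge> 0" by fact
    fix g :: "'a \<Rightarrow> ennreal" and a :: ennreal assume g[measurable]: "g \<in> borel_measurable M"
    have pw: "(\<integral>\<^sup>+y. indicator (cball x R) y * g y \<partial>M) \<le>
        (\<Sum>i. indicator (cball (d i) (R+1)) x * (\<integral>\<^sup>+y. indicator (Q i) y * g y \<partial>M))" for x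
    proof -
      have "(\<integral>\<^sup>+y. indicator (cball x R) y * g y \<partial>M) \<le>
          (\<integral>\<^sup>+y. (\<Sum>i. indicator (cball (d i) (R+1)) x * (indicator (Q i) y * g y)) \<partial>M)"
      proof (rule nn_integral_mono)
        fix y
        obtain i where i: "y \<in> Q i" using Q(2) by blast
        show "indicator (cball x R) y * g y \<le> (\<Sum>i. indicator (cball (d i) (R+1)) x * (indicator (Q i) y * g y))"
        proof (cases "y \<in> cball x R")
          case True
          have "dist (d i) y < 1/2" using Q(3)[of i] i by auto
          then have "x \<in> cball (d i) (R+1)" using True dist_triangle[of "d i" x y]
            by (auto simp: dist_commute)
          then have "indicator (cball x R) y * g y = indicator (cball (d i) (R+1)) x * (indicator (Q i) y * g y)"
            using True i by simp
          also have "\<dots> \<le> (\<Sum>i. indicator (cball (d i) (R+1)) x * (indicator (Q i) y * g y))"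
            by (rule ennreal_term_le_suminf)
          finally show ?thesis .
        qed simp
      qed
      also have "\<dots> = (\<Sum>i. indicator (cball (d i) (R+1)) x * (\<integral>\<^sup>+y. indicator (Q i) y * g y \<partial>M))"
        by (subst nn_integral_suminf) (auto simp: nn_integral_cmult)
      finally show ?thesis .
    qed
    have "(\<integral>\<^sup>+x. a * (\<integral>\<^sup>+y. indicator (cball x R) y * g y \<partial>M) \<partial>M) \<le>
        (\<integral>\<^sup>+x. (\<Sum>i. a * (indicator (cball (d i) (R+1)) x * (\<integral>\<^sup>+y. indicator (Q i) y * g y \<partial>M))) \<partial>M)"
      by (rule nn_integral_mono) (simp add: mult_left_mono pw)
    also have "\<dots> = (\<Sum>i. a * (emeasure M (cball (d i) (R+1)) * (\<integral>\<^sup>+y. indicator (Q i) y * g y \<partial>M)))"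
      by (subst nn_integral_suminf) (auto simp: nn_integral_cmult nn_integral_multc mult.assoc)
    also have "\<dots> \<le> (\<Sum>i. a * (ennreal C * (\<integral>\<^sup>+y. indicator (Q i) y * g y \<partial>M)))"
      by (intro suminf_le summableI mult_left_mono mult_right_mono C(2)) auto
    also have "\<dots> = a * ennreal C * (\<Sum>i. (\<integral>\<^sup>+y. indicator (Q i) y * g y \<partial>M))"
      by (simp add: mult.assoc)
    also have "(\<Sum>i. (\<integral>\<^sup>+y. indicator (Q i) y * g y \<partial>M)) = (\<integral>\<^sup>+y. (\<Sum>i. indicator (Q i) y * g y) \<partial>M)"
      by (subst nn_integral_suminf) auto
    also have "\<dots> = (\<integral>\<^sup>+y. g y \<partial>M)"
      by (simp add: ennreal_suminf_multc sumQ)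
    finally show "(\<integral>\<^sup>+x. a * (\<integral>\<^sup>+y. indicator (cball x R) y * g y \<partial>M) \<partial>M) \<le> a * ennreal C * (\<integral>\<^sup>+y. g y \<partial>M)" .
  qed
qed

lemma ball_integral':
  assumes "R > 0"
  obtains C where "C \<ge> 0" "\<And>(g::'a \<Rightarrow> ennreal) (h::'a \<Rightarrow> ennreal) (a::ennreal). g \<in> borel_measurable M \<Longrightarrow>
      (\<And>x. h x \<le> a * (\<integral>\<^sup>+y. indicator (cball x R) y * g y \<partial>M)) \<Longrightarrow>
      (\<integral>\<^sup>+x. h x \<partial>M) \<le> a * ennreal C * (\<integral>\<^sup>+y. g y \<partial>M)"
proof -
  obtain C where C: "C \<ge> 0" "\<And>(g::'a \<Rightarrow> ennreal) (a::ennreal). g \<in> borel_measurable M \<Longrightarrow>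
      (\<integral>\<^sup>+x. a * (\<integral>\<^sup>+y. indicator (cball x R) y * g y \<partial>M) \<partial>M) \<le> a * ennreal C * (\<integral>\<^sup>+y. g y \<partial>M)"
    using ball_integral[OF assms] by blast
  show ?thesis
  proof (rule that[OF C(1)])
    fix g h :: "'a \<Rightarrow> ennreal" and a :: ennreal
    assume g: "g \<in> borel_measurable M" and h: "\<And>x. h x \<le> a * (\<integral>\<^sup>+y. indicator (cball x R) y * g y \<partial>M)"
    have "(\<integral>\<^sup>+x. h x \<partial>M) \<le> (\<integral>\<^sup>+x. a * (\<integral>\<^sup>+y. indicator (cball x R) y * g y \<partial>M) \<partial>M)"
      by (rule nn_integral_mono) (rule h)
    also have "\<dots> \<le> a * ennreal C * (\<integral>\<^sup>+y. g y \<partial>M)" by (rule C(2)[OF g])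
    finally show "(\<integral>\<^sup>+x. h x \<partial>M) \<le> a * ennreal C * (\<integral>\<^sup>+y. g y \<partial>M)" .
  qed
qed

end


context cA begin

lemma P_lemma:
  fixes h :: "'a \<Rightarrow> complex"
  assumes hi: "integrable M h" and A: "A \<in> sets M" and h0: "\<And>y. y \<notin> A \<Longrightarrow> h y = 0"
  shows "ennreal ((cmod (integral\<^sup>L M h))\<^sup>2) \<le> emeasure M A * (\<integral>\<^sup>+y. ennreal ((cmod (h y))\<^sup>2) \<partial>M)"
proof -
  have hm[measurable]: "h \<in> borel_measurable M" using hi by auto
  have Am[measurable]: "A \<in> sets M" by fact
  have 1: "ennreal (cmod (integral\<^sup>L M h)) \<le> (\<integral>\<^sup>+y. ennreal (cmod (h y)) \<partial>M)"
    by (rule integral_norm_bound_ennreal[OF hi])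
  have 2: "(\<integral>\<^sup>+y. ennreal (cmod (h y)) \<partial>M) = (\<integral>\<^sup>+y. indicator A y * ennreal (cmod (h y)) \<partial>M)"
    by (rule nn_integral_cong) (auto simp: indicator_def h0)
  have 3: "(\<integral>\<^sup>+y. indicator A y * ennreal (cmod (h y)) \<partial>M)\<^sup>2 \<le>
      (\<integral>\<^sup>+y. (indicator A y)\<^sup>2 \<partial>M) * (\<integral>\<^sup>+y. (ennreal (cmod (h y)))\<^sup>2 \<partial>M)"
    by (rule Cauchy_Schwarz_nn_integral) auto
  have 4: "(\<integral>\<^sup>+y. ((indicator A y)::ennreal)\<^sup>2 \<partial>M) = emeasure M A"
  proof -
    have "(\<integral>\<^sup>+y. ((indicator A y)::ennreal)\<^sup>2 \<partial>M) = (\<integral>\<^sup>+y. indicator A y \<partial>M)"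
      by (rule nn_integral_cong) (auto simp: indicator_def)
    then show ?thesis using A by simp
  qed
  have 5: "(\<integral>\<^sup>+y. (ennreal (cmod (h y)))\<^sup>2 \<partial>M) = (\<integral>\<^sup>+y. ennreal ((cmod (h y))\<^sup>2) \<partial>M)"
    by (simp add: ennreal_power)
  have "ennreal ((cmod (integral\<^sup>L M h))\<^sup>2) = (ennreal (cmod (integral\<^sup>L M h)))\<^sup>2"
    by (simp add: ennreal_power)
  also have "\<dots> \<le> (\<integral>\<^sup>+y. indicator A y * ennreal (cmod (h y)) \<partial>M)\<^sup>2"
    using 1 2 by (intro power_mono) auto
  also have "\<dots> \<le> emeasure M A * (\<integral>\<^sup>+y. ennreal ((cmod (h y))\<^sup>2) \<partial>M)"
    using 3 4 5 by simp
  finally show ?thesis .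
qed

lemma t_le_sq: "t \<le> 1 + (t::real)\<^sup>2"
  using prod_le_sq[of 1 t] by simp

lemma int_bdd:
  fixes g f :: "'a \<Rightarrow> complex"
  assumes f: "sq_int M f" and g: "g \<in> borel_measurable M" and gb: "\<And>y. cmod (g y) \<le> B"
    and g0: "\<And>y. y \<notin> cball x R \<Longrightarrow> g y = 0"
  shows "integrable M (\<lambda>y. g y * f y)"
proof -
  have B0: "B \<ge> 0" using gb[of x] norm_ge_zero[of "g x"] by linarith
  have fm[measurable]: "f \<in> borel_measurable M" using f by (simp add: sq_int_def)
  have gm[measurable]: "g \<in> borel_measurable M" by fact
  define D where "D y = B * (indicator (cball x R) y + (cmod (f y))\<^sup>2)" for y
  have Di: "integrable M D" unfolding D_def
    using f fin_cball[of x R] by (intro integrable_mult_right integrable_add) (auto simp: sq_int_def)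
  show ?thesis
  proof (rule Bochner_Integration.integrable_bound[OF Di])
    show "(\<lambda>y. g y * f y) \<in> borel_measurable M" by measurable
    show "AE y in M. norm (g y * f y) \<le> norm (D y)"
    proof (intro AE_I2)
      fix y
      have D0: "D y \<ge> 0" unfolding D_def using B0 by simp
      show "norm (g y * f y) \<le> norm (D y)"
      proof (cases "y \<in> cball x R")
        case True
        have "norm (g y * f y) = cmod (g y) * cmod (f y)" by (simp add: norm_mult)
        also have "\<dots> \<le> B * cmod (f y)" by (intro mult_right_mono gb) auto
        also have "\<dots> \<le> B * (1 + (cmod (f y))\<^sup>2)" by (intro mult_left_mono t_le_sq B0)
        also have "\<dots> = D y" unfolding D_def using True by simp
        finally show ?thesis using D0 by simp
      next
        case False then show ?thesis using D0 g0[OF False] by simp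
      qed
    qed
  qed
qed

end

locale kern = cA M for M :: "'a::metric_space measure" +
  fixes k :: "'a \<Rightarrow> 'a \<Rightarrow> complex" and K r0 :: real
  assumes kb: "\<And>x y. cmod (k x y) \<le> K" and r0: "r0 > 0"
    and supp: "\<And>x y. dist x y > r0 \<Longrightarrow> k x y = 0"
    and uc: "uniformly_continuous_on UNIV (\<lambda>p. k (fst p) (snd p))"
begin

lemma K0: "K \<ge> 0" using kb[of undefined undefined] norm_ge_zero[of "k undefined undefined"] by linarith

lemma kzero: "y \<notin> cball x r0 \<Longrightarrow> k x y = 0" using supp by (simp add: not_le)

lemma uc1: assumes "e > 0" shows "\<exists>d>0. \<forall>x x' y. dist x' x < d \<longrightarrow> cmod (k x' y - k x y) < e"
proof -
  obtain d where d: "d > 0" "\<forall>p\<in>UNIV. \<forall>p'\<in>UNIV. dist p' p < d \<longrightarrow> dist (k (fst p') (snd p')) (k (fst p) (snd p)) < e"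
    using uc assms unfolding uniformly_continuous_on_def by blast
  show ?thesis
  proof (intro exI[of _ d] conjI allI impI)
    fix x x' y :: 'a assume "dist x' x < d"
    then have "dist (x', y) (x, y) < d" by (simp add: dist_Pair_Pair)
    then show "cmod (k x' y - k x y) < e" using d(2) by (auto simp: dist_norm)
  qed (fact d(1))
qed

lemma uc2: assumes "e > 0" shows "\<exists>d>0. \<forall>x y y'. dist y' y < d \<longrightarrow> cmod (k x y' - k x y) < e"
proof -
  obtain d where d: "d > 0" "\<forall>p\<in>UNIV. \<forall>p'\<in>UNIV. dist p' p < d \<longrightarrow> dist (k (fst p') (snd p')) (k (fst p) (snd p)) < e"
    using uc assms unfolding uniformly_continuous_on_def by blast
  show ?thesis
  proof (intro exI[of _ d] conjI allI impI)
    fix x y y' :: 'a assume "dist y' y < d"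
    then have "dist (x, y') (x, y) < d" by (simp add: dist_Pair_Pair)
    then show "cmod (k x y' - k x y) < e" using d(2) by (auto simp: dist_norm)
  qed (fact d(1))
qed

lemma kcont: "continuous_on UNIV (\<lambda>y. k x y)"
  unfolding continuous_on_iff
proof (intro ballI allI impI)
  fix y and e :: real assume "e > 0"
  then obtain d where "d > 0" "\<forall>x y y'. dist y' y < d \<longrightarrow> cmod (k x y' - k x y) < e" using uc2 by blast
  then show "\<exists>d>0. \<forall>y'\<in>UNIV. dist y' y < d \<longrightarrow> dist (k x y') (k x y) < e"
    by (auto simp: dist_norm)
qed

lemma kmeas[measurable]: "(\<lambda>y. k x y) \<in> borel_measurable M"
  by (rule cont_meas[OF kcont])

lemma kint: assumes "sq_int M f" shows "integrable M (\<lambda>y. k x y * f y)"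
  by (rule int_bdd[OF assms kmeas kb kzero])

lemma Op_cont: assumes f: "sq_int M f" shows "continuous_on UNIV (Op M k f)"
  unfolding continuous_on_iff
proof (intro ballI allI impI)
  fix x :: 'a and e :: real assume e: "e > 0"
  have fm[measurable]: "f \<in> borel_measurable M" using f by (simp add: sq_int_def)
  define L where "L = (\<integral>y. indicator (cball x (r0+1)) y * cmod (f y) \<partial>M)"
  have L0: "L \<ge> 0" unfolding L_def by (rule Bochner_Integration.integral_nonneg) simp
  have intL0: "integrable M (\<lambda>y. complex_of_real (indicator (cball x (r0+1)) y) * f y)"
  proof (rule int_bdd[OF f, of _ 1 x "r0+1"])
    show "(\<lambda>y. complex_of_real (indicator (cball x (r0+1)) y)) \<in> borel_measurable M" by measurable
  qed (auto simp: indicator_def)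
  have intL: "integrable M (\<lambda>y. indicator (cball x (r0+1)) y * cmod (f y))"
    using integrable_norm[OF intL0] by (simp add: norm_mult)
  define e' where "e' = e / (L + 1)"
  have e': "e' > 0" unfolding e'_def using e L0 by simp
  obtain d where d: "d > 0" "\<forall>x x' y. dist x' x < d \<longrightarrow> cmod (k x' y - k x y) < e'" using uc1[OF e'] by blast
  show "\<exists>\<delta>>0. \<forall>x'\<in>UNIV. dist x' x < \<delta> \<longrightarrow> dist (Op M k f x') (Op M k f x) < e"
  proof (intro exI[of _ "min d 1"] conjI ballI impI)
    show "min d 1 > 0" using d by simp
    fix x' assume x': "dist x' x < min d 1"
    have i1: "integrable M (\<lambda>y. k x' y * f y)" by (rule kint[OF f])
    have i2: "integrable M (\<lambda>y. k x y * f y)" by (rule kint[OF f])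
    have "dist (Op M k f x') (Op M k f x) = cmod (\<integral>y. k x' y * f y - k x y * f y \<partial>M)"
      unfolding Op_def dist_norm using i1 i2 by simp
    also have "\<dots> \<le> (\<integral>y. cmod (k x' y * f y - k x y * f y) \<partial>M)" by (rule integral_norm_bound)
    also have "\<dots> \<le> (\<integral>y. e' * (indicator (cball x (r0+1)) y * cmod (f y)) \<partial>M)"
    proof (rule integral_mono)
      show "integrable M (\<lambda>y. cmod (k x' y * f y - k x y * f y))" using i1 i2 by auto
      show "integrable M (\<lambda>y. e' * (indicator (cball x (r0+1)) y * cmod (f y)))" using intL by auto
      fix y
      show "cmod (k x' y * f y - k x y * f y) \<le> e' * (indicator (cball x (r0+1)) y * cmod (f y))"
      proof (cases "y \<in> cball x (r0+1)")
        case True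
        have "cmod (k x' y * f y - k x y * f y) = cmod (k x' y - k x y) * cmod (f y)"
          by (simp add: left_diff_distrib[symmetric] norm_mult)
        also have "\<dots> \<le> e' * cmod (f y)"
          using d(2) x' by (intro mult_right_mono) (auto intro: less_imp_le)
        finally show ?thesis using True by simp
      next
        case False
        then have "dist x y > r0 + 1" by simp
        then have a: "k x y = 0" using supp[of x y] by simp
        have "dist x y \<le> dist x' x + dist x' y" by (rule dist_triangle3)
        then have "dist x' y > r0" using x' \<open>dist x y > r0 + 1\<close> by simp
        then have b: "k x' y = 0" using supp by simp
        show ?thesis using a b False by simp
      qed
    qed
    also have "\<dots> = e' * L" unfolding L_def by simp
    also have "\<dots> < e"
    proof -
      have "e' * L = e * (L / (L + 1))" unfolding e'_def by (simp add: field_simps)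
      also have "\<dots> < e * 1" using e L0 by (intro mult_strict_left_mono) auto
      finally show ?thesis by simp
    qed
    finally show "dist (Op M k f x') (Op M k f x) < e" .
  qed
qed

lemma Op_meas: "sq_int M f \<Longrightarrow> Op M k f \<in> borel_measurable M"
  by (rule cont_meas[OF Op_cont])

lemma Op_pw:
  assumes f: "sq_int M f" and C1: "\<And>x. emeasure M (cball x r0) \<le> ennreal C1" "C1 \<ge> 0"
  shows "ennreal ((cmod (Op M k f x))\<^sup>2) \<le> ennreal (C1 * K\<^sup>2) * (\<integral>\<^sup>+y. indicator (cball x r0) y * ennreal ((cmod (f y))\<^sup>2) \<partial>M)"
proof -
  have fm[measurable]: "f \<in> borel_measurable M" using f by (simp add: sq_int_def)
  have "ennreal ((cmod (Op M k f x))\<^sup>2) \<le> emeasure M (cball x r0) * (\<integral>\<^sup>+y. ennreal ((cmod (k x y * f y))\<^sup>2) \<partial>M)"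
    unfolding Op_def by (rule P_lemma[OF kint[OF f] cball_M]) (simp add: kzero)
  also have "\<dots> \<le> ennreal C1 * (\<integral>\<^sup>+y. ennreal (K\<^sup>2) * (indicator (cball x r0) y * ennreal ((cmod (f y))\<^sup>2)) \<partial>M)"
  proof (intro mult_mono C1(1) nn_integral_mono)
    fix y
    show "ennreal ((cmod (k x y * f y))\<^sup>2) \<le> ennreal (K\<^sup>2) * (indicator (cball x r0) y * ennreal ((cmod (f y))\<^sup>2))"
    proof (cases "y \<in> cball x r0")
      case True
      have "(cmod (k x y * f y))\<^sup>2 \<le> K\<^sup>2 * (cmod (f y))\<^sup>2"
        unfolding norm_mult power_mult_distrib by (intro mult_right_mono power_mono kb) auto
      then show ?thesis using True by (simp add: ennreal_mult'[symmetric] ennreal_leI)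
    qed (simp add: kzero)
  qed auto
  also have "\<dots> = ennreal (C1 * K\<^sup>2) * (\<integral>\<^sup>+y. indicator (cball x r0) y * ennreal ((cmod (f y))\<^sup>2) \<partial>M)"
    by (subst nn_integral_cmult) (auto simp: ennreal_mult C1(2) mult.assoc)
  finally show ?thesis .
qed

lemma Op_bounded:
  obtains CS where "CS \<ge> 0" "\<And>f. sq_int M f \<Longrightarrow> sq_int M (Op M k f)" "opb M (Op M k) CS"
proof -
  obtain C1 where C1: "C1 \<ge> 0" "\<And>x. emeasure M (cball x r0) \<le> ennreal C1" using unif_ball[OF r0] by blast
  obtain C2 where C2: "C2 \<ge> 0" "\<And>(g::'a \<Rightarrow> ennreal) (h::'a \<Rightarrow> ennreal) (a::ennreal). g \<in> borel_measurable M \<Longrightarrow>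
      (\<And>x. h x \<le> a * (\<integral>\<^sup>+y. indicator (cball x r0) y * g y \<partial>M)) \<Longrightarrow>
      (\<integral>\<^sup>+x. h x \<partial>M) \<le> a * ennreal C2 * (\<integral>\<^sup>+y. g y \<partial>M)"
    using ball_integral'[OF r0] by blast
  define CS where "CS = sqrt (C1 * K\<^sup>2 * C2)"
  have main: "sq_int M (Op M k f) \<and> l2norm M (Op M k f) \<le> CS * l2norm M f" if f: "sq_int M f" for f
  proof -
    have fm[measurable]: "f \<in> borel_measurable M" using f by (simp add: sq_int_def)
    have "(\<integral>\<^sup>+x. ennreal ((cmod (Op M k f x))\<^sup>2) \<partial>M) \<le> ennreal (C1 * K\<^sup>2) * ennreal C2 * (\<integral>\<^sup>+y. ennreal ((cmod (f y))\<^sup>2) \<partial>M)"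
      by (rule C2(2)) (auto intro: Op_pw[OF f C1(2,1)])
    also have "\<dots> = ennreal (C1 * K\<^sup>2 * C2 * (l2norm M f)\<^sup>2)"
      using l2norm_nn[OF f] C1(1) C2(1) by (simp add: ennreal_mult)
    finally have *: "(\<integral>\<^sup>+x. ennreal ((cmod (Op M k f x))\<^sup>2) \<partial>M) \<le> ennreal (C1 * K\<^sup>2 * C2 * (l2norm M f)\<^sup>2)" .
    have c0: "0 \<le> C1 * K\<^sup>2 * C2 * (l2norm M f)\<^sup>2" using C1(1) C2(1) by simp
    note s = sq_int_nnI[OF Op_meas[OF f] * c0]
    have "l2norm M (Op M k f) \<le> sqrt (C1 * K\<^sup>2 * C2 * (l2norm M f)\<^sup>2)"
      using s(2) real_sqrt_le_mono by fastforce
    also have "\<dots> = CS * l2norm M f" unfolding CS_def by (simp add: real_sqrt_mult)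
    finally show ?thesis using s(1) by simp
  qed
  show ?thesis
  proof (rule that)
    show "CS \<ge> 0" unfolding CS_def using C1(1) C2(1) by simp
    show "\<And>f. sq_int M f \<Longrightarrow> sq_int M (Op M k f)" using main by blast
    show "opb M (Op M k) CS" unfolding opb_def using main by blast
  qed
qed

lemma Op_hom: "Op M k (\<lambda>y. c * f y) x = c * Op M k f x"
proof -
  have "Op M k (\<lambda>y. c * f y) x = (\<integral>y. c * (k x y * f y) \<partial>M)"
    unfolding Op_def by (rule Bochner_Integration.integral_cong) (auto simp: ac_simps)
  then show ?thesis unfolding Op_def by simp
qed

lemma Op_supp:
  assumes "\<And>y. y \<notin> cball z r \<Longrightarrow> g y = 0" "x \<notin> cball z (r + r0)"
  shows "Op M k g x = 0"
proof -
  have "(\<integral>y. k x y * g y \<partial>M) = (\<integral>y. 0 \<partial>M)"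
  proof (rule Bochner_Integration.integral_cong)
    fix y
    show "k x y * g y = 0"
    proof (cases "y \<in> cball z r")
      case True
      have "dist z x \<le> dist z y + dist y x" by (rule dist_triangle)
      then have "dist x y > r0" using True assms(2) by (simp add: dist_commute)
      then show ?thesis using supp by simp
    qed (simp add: assms(1))
  qed simp
  then show ?thesis unfolding Op_def by simp
qed

lemma Op_loc:
  assumes "x \<in> cball z r"
  shows "Op M k f x = Op M k (mult_ind (cball z (r + r0)) f) x"
  unfolding Op_def mult_ind_def
proof (rule Bochner_Integration.integral_cong)
  fix y
  show "k x y * f y = k x y * (indicator (cball z (r + r0)) y * f y)"
  proof (cases "dist x y \<le> r0")
    case True
    have "dist z y \<le> dist z x + dist x y" by (rule dist_triangle)
    then have "y \<in> cball z (r + r0)" using True assms by simp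
    then show ?thesis by simp
  qed (simp add: supp)
qed simp

end


lemma sq_int_rmult:
  assumes f: "sq_int M f" and pm: "p \<in> borel_measurable M" and pb: "\<And>y. \<bar>p y\<bar> \<le> 1"
  shows "sq_int M (\<lambda>y. complex_of_real (p y) * f y)"
proof (rule sq_int_bound[OF f])
  have [measurable]: "f \<in> borel_measurable M" using f by (simp add: sq_int_def)
  have [measurable]: "p \<in> borel_measurable M" by fact
  show "(\<lambda>y. complex_of_real (p y) * f y) \<in> borel_measurable M" by measurable
  fix y
  have "cmod (complex_of_real (p y) * f y) = \<bar>p y\<bar> * cmod (f y)" by (simp add: norm_mult)
  also have "\<dots> \<le> 1 * cmod (f y)" by (intro mult_right_mono pb) auto
  finally show "cmod (complex_of_real (p y) * f y) \<le> cmod (f y)" by simp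
qed

context kern begin

lemma comm_pw:
  fixes \<psi> :: "nat \<Rightarrow> 'a \<Rightarrow> real"
  assumes f: "sq_int M f" and C1: "\<And>x. emeasure M (cball x r0) \<le> ennreal C1" "C1 \<ge> 0"
    and \<psi>m: "\<And>j. \<psi> j \<in> borel_measurable M" and \<psi>b: "\<And>j y. 0 \<le> \<psi> j y" "\<And>j y. \<psi> j y \<le> 1"
    and \<eta>: "\<And>x y. dist x y \<le> r0 \<Longrightarrow> (\<Sum>j. ennreal ((\<psi> j x - \<psi> j y)\<^sup>2)) \<le> ennreal \<eta>" "\<eta> \<ge> 0"
  shows "(\<Sum>j. ennreal ((cmod (complex_of_real (\<psi> j x) * Op M k f x - Op M k (\<lambda>y. complex_of_real (\<psi> j y) * f y) x))\<^sup>2))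
     \<le> ennreal (C1 * K\<^sup>2 * \<eta>) * (\<integral>\<^sup>+y. indicator (cball x r0) y * ennreal ((cmod (f y))\<^sup>2) \<partial>M)"
proof -
  have fm[measurable]: "f \<in> borel_measurable M" using f by (simp add: sq_int_def)
  have [measurable]: "\<psi> j \<in> borel_measurable M" for j by (rule \<psi>m)
  define h where "h j y = complex_of_real (\<psi> j x - \<psi> j y) * k x y * f y" for j y
  define Z where "Z y = ennreal (K\<^sup>2) * (indicator (cball x r0) y * ennreal ((cmod (f y))\<^sup>2))" for y
  have Zm[measurable]: "Z \<in> borel_measurable M" unfolding Z_def by measurable
  have hi: "integrable M (h j)" for j
  proof -
    have gm: "(\<lambda>y. complex_of_real (\<psi> j x - \<psi> j y) * k x y) \<in> borel_measurable M" by measurable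
    have gb: "cmod (complex_of_real (\<psi> j x - \<psi> j y) * k x y) \<le> 1 * K" for y
    proof -
      have "\<bar>\<psi> j x - \<psi> j y\<bar> \<le> 1" using \<psi>b[of j x] \<psi>b[of j y] by auto
      then show ?thesis unfolding norm_mult norm_of_real by (intro mult_mono kb) auto
    qed
    have g0: "complex_of_real (\<psi> j x - \<psi> j y) * k x y = 0" if "y \<notin> cball x r0" for y
      using kzero[OF that] by simp
    show ?thesis unfolding h_def by (rule int_bdd[OF f gm gb g0])
  qed
  have eq: "complex_of_real (\<psi> j x) * Op M k f x - Op M k (\<lambda>y. complex_of_real (\<psi> j y) * f y) x = integral\<^sup>L M (h j)" for j
  proof -
    have sq: "sq_int M (\<lambda>y. complex_of_real (\<psi> j y) * f y)"
      by (rule sq_int_rmult[OF f \<psi>m]) (use \<psi>b in auto)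
    have i1: "integrable M (\<lambda>y. complex_of_real (\<psi> j x) * (k x y * f y))" using kint[OF f] by auto
    have i2: "integrable M (\<lambda>y. k x y * (complex_of_real (\<psi> j y) * f y))" using kint[OF sq] .
    have "complex_of_real (\<psi> j x) * Op M k f x - Op M k (\<lambda>y. complex_of_real (\<psi> j y) * f y) x
       = (\<integral>y. complex_of_real (\<psi> j x) * (k x y * f y) \<partial>M) - (\<integral>y. k x y * (complex_of_real (\<psi> j y) * f y) \<partial>M)"
      unfolding Op_def by simp
    also have "\<dots> = (\<integral>y. complex_of_real (\<psi> j x) * (k x y * f y) - k x y * (complex_of_real (\<psi> j y) * f y) \<partial>M)"
      using i1 i2 by simp
    also have "\<dots> = integral\<^sup>L M (h j)"
      unfolding h_def by (rule Bochner_Integration.integral_cong) (auto simp: algebra_simps)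
    finally show ?thesis .
  qed
  have pj: "ennreal ((cmod (integral\<^sup>L M (h j)))\<^sup>2) \<le> ennreal C1 * (\<integral>\<^sup>+y. ennreal ((\<psi> j x - \<psi> j y)\<^sup>2) * Z y \<partial>M)" for j
  proof -
    have "ennreal ((cmod (integral\<^sup>L M (h j)))\<^sup>2) \<le> emeasure M (cball x r0) * (\<integral>\<^sup>+y. ennreal ((cmod (h j y))\<^sup>2) \<partial>M)"
      by (rule P_lemma[OF hi cball_M]) (simp add: h_def kzero)
    also have "\<dots> \<le> ennreal C1 * (\<integral>\<^sup>+y. ennreal ((\<psi> j x - \<psi> j y)\<^sup>2) * Z y \<partial>M)"
    proof (intro mult_mono C1(1) nn_integral_mono)
      fix y
      show "ennreal ((cmod (h j y))\<^sup>2) \<le> ennreal ((\<psi> j x - \<psi> j y)\<^sup>2) * Z y"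
      proof (cases "y \<in> cball x r0")
        case True
        have "(cmod (h j y))\<^sup>2 = (\<psi> j x - \<psi> j y)\<^sup>2 * ((cmod (k x y))\<^sup>2 * (cmod (f y))\<^sup>2)"
          unfolding h_def norm_mult power_mult_distrib norm_of_real power2_abs by simp
        also have "\<dots> \<le> (\<psi> j x - \<psi> j y)\<^sup>2 * (K\<^sup>2 * (cmod (f y))\<^sup>2)"
          by (intro mult_left_mono mult_right_mono power_mono kb) auto
        finally have "ennreal ((cmod (h j y))\<^sup>2) \<le> ennreal ((\<psi> j x - \<psi> j y)\<^sup>2 * (K\<^sup>2 * (cmod (f y))\<^sup>2))"
          by (rule ennreal_leI)
        then show ?thesis using True unfolding Z_def by (simp add: ennreal_mult)
      qed (simp add: h_def kzero Z_def)
    qed auto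
    finally show ?thesis .
  qed
  have "(\<Sum>j. ennreal ((cmod (complex_of_real (\<psi> j x) * Op M k f x - Op M k (\<lambda>y. complex_of_real (\<psi> j y) * f y) x))\<^sup>2))
      \<le> (\<Sum>j. ennreal C1 * (\<integral>\<^sup>+y. ennreal ((\<psi> j x - \<psi> j y)\<^sup>2) * Z y \<partial>M))"
    unfolding eq by (intro suminf_le summableI pj)
  also have "\<dots> = ennreal C1 * (\<integral>\<^sup>+y. (\<Sum>j. ennreal ((\<psi> j x - \<psi> j y)\<^sup>2) * Z y) \<partial>M)"
    by (subst nn_integral_suminf) auto
  also have "\<dots> \<le> ennreal C1 * (\<integral>\<^sup>+y. ennreal \<eta> * Z y \<partial>M)"
  proof (intro mult_left_mono nn_integral_mono)
    fix y
    show "(\<Sum>j. ennreal ((\<psi> j x - \<psi> j y)\<^sup>2) * Z y) \<le> ennreal \<eta> * Z y"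
    proof (cases "y \<in> cball x r0")
      case True
      then show ?thesis unfolding ennreal_suminf_multc by (intro mult_right_mono \<eta>(1)) auto
    qed (simp add: Z_def)
  qed auto
  also have "\<dots> = ennreal (C1 * K\<^sup>2 * \<eta>) * (\<integral>\<^sup>+y. indicator (cball x r0) y * ennreal ((cmod (f y))\<^sup>2) \<partial>M)"
    unfolding Z_def using C1(2) \<eta>(2)
    by (subst nn_integral_cmult, measurable)+ (simp add: ennreal_mult mult_ac)
  finally show ?thesis .
qed

end

context cA begin

lemma sum_Q_l2:
  assumes Q: "disjoint_family Q" "\<And>y. \<exists>i. y \<in> Q i" "\<And>i. Q i \<in> sets M" and g: "sq_int M g"
  shows "(\<Sum>j. ennreal ((l2norm M (mult_ind (Q j) g))\<^sup>2)) = ennreal ((l2norm M g)\<^sup>2)"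
proof -
  have gm[measurable]: "g \<in> borel_measurable M" using g by (simp add: sq_int_def)
  have [measurable]: "Q i \<in> sets M" for i by (rule Q(3))
  have sumQ: "(\<Sum>i. indicator (Q i) y :: ennreal) = 1" for y
    using suminf_indicator[OF Q(1), of y] Q(2)[of y] by (auto simp: indicator_def)
  have "(\<Sum>j. ennreal ((l2norm M (mult_ind (Q j) g))\<^sup>2)) =
     (\<Sum>j. \<integral>\<^sup>+z. indicator (Q j) z * ennreal ((cmod (g z))\<^sup>2) \<partial>M)"
  proof (rule suminf_cong)
    fix j
    have "ennreal ((l2norm M (mult_ind (Q j) g))\<^sup>2) = (\<integral>\<^sup>+z. ennreal ((cmod (mult_ind (Q j) g z))\<^sup>2) \<partial>M)"
      by (rule l2norm_nn[OF sq_int_mult_ind[OF Q(3) g]])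
    also have "\<dots> = (\<integral>\<^sup>+z. indicator (Q j) z * ennreal ((cmod (g z))\<^sup>2) \<partial>M)"
      by (rule nn_integral_cong) (auto simp: mult_ind_def indicator_def)
    finally show "ennreal ((l2norm M (mult_ind (Q j) g))\<^sup>2) = (\<integral>\<^sup>+z. indicator (Q j) z * ennreal ((cmod (g z))\<^sup>2) \<partial>M)" .
  qed
  also have "\<dots> = (\<integral>\<^sup>+z. (\<Sum>j. indicator (Q j) z * ennreal ((cmod (g z))\<^sup>2)) \<partial>M)"
    by (subst nn_integral_suminf) auto
  also have "\<dots> = (\<integral>\<^sup>+z. ennreal ((cmod (g z))\<^sup>2) \<partial>M)"
    by (simp add: ennreal_suminf_multc sumQ)
  also have "\<dots> = ennreal ((l2norm M g)\<^sup>2)" by (rule l2norm_nn[OF g, symmetric])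
  finally show ?thesis .
qed

lemma pou:
  assumes e: "\<epsilon> > 0" and r: "r > 0"
  obtains \<psi> :: "nat \<Rightarrow> 'a \<Rightarrow> real" and d :: "nat \<Rightarrow> 'a" and s :: real where
    "\<And>j. \<psi> j \<in> borel_measurable M" "\<And>j y. 0 \<le> \<psi> j y" "\<And>j y. \<psi> j y \<le> 1"
    "\<And>y. (\<Sum>j. ennreal ((\<psi> j y)\<^sup>2)) = 1"
    "\<And>x y. dist x y < r \<Longrightarrow> (\<Sum>j. ennreal ((\<psi> j x - \<psi> j y)\<^sup>2)) \<le> ennreal (\<epsilon>\<^sup>2)"
    "\<And>j y. \<psi> j y \<noteq> 0 \<Longrightarrow> dist y (d j) \<le> s"
proof -
  have pA: "property_A M" using cA_parts(9)[OF cls] .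
  obtain \<phi> :: "'a \<Rightarrow> 'a \<Rightarrow> complex" and s0 where
    \<phi>b: "l2_borel_map M \<phi>" and \<phi>1: "\<And>x. l2norm M (\<phi> x) = 1"
    and \<phi>s: "\<And>x. AE y in M. y \<notin> cball x s0 \<longrightarrow> \<phi> x y = 0"
    and \<phi>c: "\<And>x y. dist x y < r \<Longrightarrow> l2norm M (\<lambda>z. \<phi> x z - \<phi> y z) < \<epsilon>"
  proof -
    from pA[unfolded property_A_def, rule_format, OF e r] obtain \<phi> :: "'a \<Rightarrow> 'a \<Rightarrow> complex" where
      a: "l2_borel_map M \<phi>" "\<forall>x. l2norm M (\<phi> x) = 1" "\<exists>s. \<forall>x. AE y in M. y \<notin> cball x s \<longrightarrow> \<phi> x y = 0"
        "\<forall>x y. dist x y < r \<longrightarrow> l2norm M (\<lambda>z. \<phi> x z - \<phi> y z) < \<epsilon>"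
      by blast
    from a(3) obtain s where "\<forall>x. AE y in M. y \<notin> cball x s \<longrightarrow> \<phi> x y = 0" by blast
    then show ?thesis using that a by blast
  qed
  have \<phi>sq: "sq_int M (\<phi> x)" for x using \<phi>b unfolding l2_borel_map_def by blast
  obtain d :: "nat \<Rightarrow> 'a" and Q :: "nat \<Rightarrow> 'a set" where
    Q: "disjoint_family Q" "\<And>y. \<exists>i. y \<in> Q i" "\<And>i. Q i \<subseteq> ball (d i) (1/2)" "\<And>i. Q i \<in> sets borel"
  proof -
    obtain d :: "nat \<Rightarrow> 'a" and Q where "disjoint_family Q \<and> (\<forall>y. \<exists>i. y \<in> Q i) \<and>
     (\<forall>i. Q i \<subseteq> ball (d i) (1/2)) \<and> (\<forall>i. Q i \<in> sets borel)"
      using partition_exists[OF proper] by blast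
    then show ?thesis using that by blast
  qed
  have QM: "Q i \<in> sets M" for i using Q(4) sM by simp
  define \<psi> where "\<psi> j x = l2norm M (mult_ind (Q j) (\<phi> x))" for j x
  show ?thesis
  proof (rule that[of \<psi> d "s0 + 1"])
    fix j
    show "\<psi> j \<in> borel_measurable M"
    proof (rule borel_measurableI)
      fix S :: "real set" assume S: "open S"
      define U where "U = {g. sq_int M g \<and> l2norm M (mult_ind (Q j) g) \<in> S}"
      have "l2_open M U" unfolding l2_open_def
      proof (intro ballI impI)
        fix g assume "g \<in> U" "sq_int M g"
        then have gS: "l2norm M (mult_ind (Q j) g) \<in> S" unfolding U_def by auto
        obtain e where e: "e > 0" "ball (l2norm M (mult_ind (Q j) g)) e \<subseteq> S"
          using S gS open_contains_ball by blast
        show "\<exists>e>0. \<forall>h. sq_int M h \<and> l2norm M (\<lambda>x. h x - g x) < e \<longrightarrow> h \<in> U"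
        proof (intro exI[of _ e] conjI allI impI)
          fix h assume h: "sq_int M h \<and> l2norm M (\<lambda>x. h x - g x) < e"
          have "\<bar>l2norm M (mult_ind (Q j) h) - l2norm M (mult_ind (Q j) g)\<bar>
              \<le> l2norm M (\<lambda>x. mult_ind (Q j) h x - mult_ind (Q j) g x)"
            by (rule l2norm_rev_triangle) (use h \<open>sq_int M g\<close> sq_int_mult_ind[OF QM] in auto)
          also have "(\<lambda>x. mult_ind (Q j) h x - mult_ind (Q j) g x) = mult_ind (Q j) (\<lambda>x. h x - g x)"
            by (auto simp: mult_ind_def algebra_simps)
          also have "l2norm M (mult_ind (Q j) (\<lambda>x. h x - g x)) \<le> l2norm M (\<lambda>x. h x - g x)"
            by (rule l2norm_mult_ind_le[OF QM]) (use h \<open>sq_int M g\<close> sq_int_diff in auto)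
          finally have "dist (l2norm M (mult_ind (Q j) h)) (l2norm M (mult_ind (Q j) g)) < e"
            using h by (simp add: dist_real_def)
          then show "h \<in> U" using e h unfolding U_def by (auto simp: dist_commute)
        qed (fact e(1))
      qed
      then have "{x. \<phi> x \<in> U} \<in> sets borel" using \<phi>b unfolding l2_borel_map_def by blast
      moreover have "{x. \<phi> x \<in> U} = \<psi> j -` S \<inter> space M" unfolding U_def \<psi>_def using \<phi>sq by auto
      ultimately show "\<psi> j -` S \<inter> space M \<in> sets M" using sM by simp
    qed
  next
    fix j y show "0 \<le> \<psi> j y" unfolding \<psi>_def by simp
  next
    fix j y show "\<psi> j y \<le> 1" unfolding \<psi>_def using l2norm_mult_ind_le[OF QM \<phi>sq, of j y] \<phi>1[of y] by simp
  next
    fix y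
    show "(\<Sum>j. ennreal ((\<psi> j y)\<^sup>2)) = 1"
      unfolding \<psi>_def using sum_Q_l2[OF Q(1,2) QM \<phi>sq, of y] \<phi>1 by simp
  next
    fix x y :: 'a assume xy: "dist x y < r"
    have sq: "sq_int M (\<lambda>z. \<phi> x z - \<phi> y z)" using sq_int_diff \<phi>sq by blast
    have "(\<Sum>j. ennreal ((\<psi> j x - \<psi> j y)\<^sup>2)) \<le> (\<Sum>j. ennreal ((l2norm M (mult_ind (Q j) (\<lambda>z. \<phi> x z - \<phi> y z)))\<^sup>2))"
    proof (intro suminf_le summableI ennreal_leI)
      fix j
      have "\<bar>\<psi> j x - \<psi> j y\<bar> \<le> l2norm M (\<lambda>z. mult_ind (Q j) (\<phi> x) z - mult_ind (Q j) (\<phi> y) z)"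
        unfolding \<psi>_def by (rule l2norm_rev_triangle) (use sq_int_mult_ind[OF QM] \<phi>sq in auto)
      also have "(\<lambda>z. mult_ind (Q j) (\<phi> x) z - mult_ind (Q j) (\<phi> y) z) = mult_ind (Q j) (\<lambda>z. \<phi> x z - \<phi> y z)"
        by (auto simp: mult_ind_def algebra_simps)
      finally have "\<bar>\<psi> j x - \<psi> j y\<bar>\<^sup>2 \<le> (l2norm M (mult_ind (Q j) (\<lambda>z. \<phi> x z - \<phi> y z)))\<^sup>2"
        by (rule power_mono) simp
      then show "(\<psi> j x - \<psi> j y)\<^sup>2 \<le> (l2norm M (mult_ind (Q j) (\<lambda>z. \<phi> x z - \<phi> y z)))\<^sup>2"
        by simp
    qed
    also have "\<dots> = ennreal ((l2norm M (\<lambda>z. \<phi> x z - \<phi> y z))\<^sup>2)" by (rule sum_Q_l2[OF Q(1,2) QM sq])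
    also have "\<dots> \<le> ennreal (\<epsilon>\<^sup>2)"
      using \<phi>c[OF xy] by (intro ennreal_leI power_mono) auto
    finally show "(\<Sum>j. ennreal ((\<psi> j x - \<psi> j y)\<^sup>2)) \<le> ennreal (\<epsilon>\<^sup>2)" .
  next
    fix j y assume nz: "\<psi> j y \<noteq> 0"
    show "dist y (d j) \<le> s0 + 1"
    proof (rule ccontr)
      assume far: "\<not> dist y (d j) \<le> s0 + 1"
      have "l2norm M (mult_ind (Q j) (\<phi> y)) = l2norm M (\<lambda>z. 0)"
      proof (rule l2norm_AE_cong)
        show "mult_ind (Q j) (\<phi> y) \<in> borel_measurable M"
          by (rule mult_ind_meas[OF QM sq_int_meas[OF \<phi>sq]])
        show "(\<lambda>z. 0::complex) \<in> borel_measurable M" by simp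
        show "AE z in M. mult_ind (Q j) (\<phi> y) z = 0"
          using \<phi>s[of y]
        proof eventually_elim
          case (elim z)
          show ?case
          proof (cases "z \<in> Q j")
            case True
            then have "dist (d j) z < 1/2" using Q(3)[of j] by auto
            then have "z \<notin> cball y s0" using far dist_triangle[of y "d j" z] dist_commute[of z "d j"] by auto
            then show ?thesis using elim by (simp add: mult_ind_def)
          qed (simp add: mult_ind_def)
        qed
      qed
      then show False using nz unfolding \<psi>_def by simp
    qed
  qed
qed

end


context cA begin

lemma good_kern:
  assumes "good_kernel k"
  obtains K r0 where "kern M k K r0"
proof -
  obtain a where a: "\<forall>z\<in>range (\<lambda>p. k (fst p) (snd p)). norm z \<le> a"
    using assms unfolding good_kernel_def bounded_iff by blast
  have kb: "cmod (k x y) \<le> a" for x y using a by (metis UNIV_I fst_conv image_eqI snd_conv)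
  obtain r where r: "\<And>x y. dist x y > r \<Longrightarrow> k x y = 0" using assms unfolding good_kernel_def by blast
  have uc: "uniformly_continuous_on UNIV (\<lambda>p. k (fst p) (snd p))"
    using assms unfolding good_kernel_def by blast
  have "kern M k a (max r 1)"
  proof (unfold_locales)
    show "cmod (k x y) \<le> a" for x y by (rule kb)
    show "max r 1 > 0" by simp
    show "dist x y > max r 1 \<Longrightarrow> k x y = 0" for x y using r by simp
    show "uniformly_continuous_on UNIV (\<lambda>p. k (fst p) (snd p))" by (rule uc)
  qed
  then show ?thesis by (rule that)
qed

lemma approx:
  assumes T: "in_E M T" and e: "e > 0"
  obtains k K r0 where "kern M k K r0"
    "\<And>f. sq_int M f \<Longrightarrow> l2norm M (\<lambda>x. T f x - Op M k f x) \<le> e * l2norm M f"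
proof -
  have bT: "bounded_op M T" using T unfolding in_E_def by blast
  obtain k where gk: "good_kernel k" and on: "opnorm M (\<lambda>f x. T f x - Op M k f x) < e"
    using T e unfolding in_E_def by blast
  obtain K r0 where kr: "kern M k K r0" using good_kern[OF gk] by blast
  interpret kern M k K r0 by (rule kr)
  obtain CS where CS: "CS \<ge> 0" "\<And>f. sq_int M f \<Longrightarrow> sq_int M (Op M k f)" "opb M (Op M k) CS"
    using Op_bounded by blast
  obtain CT where CT: "CT \<ge> 0" "opb M T CT" using bop_opb[OF bT] by blast
  define A where "A = (\<lambda>f x. T f x - Op M k f x)"
  have opbA: "opb M A (CT + CS)" unfolding opb_def A_def
  proof (intro allI impI)
    fix f assume f: "sq_int M f"
    have "l2norm M (\<lambda>x. T f x - Op M k f x) \<le> l2norm M (T f) + l2norm M (Op M k f)"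
      by (rule l2norm_triangle_diff[OF bop_sq[OF bT f] CS(2)[OF f]])
    also have "\<dots> \<le> CT * l2norm M f + CS * l2norm M f"
      using CT(2) CS(3) f unfolding opb_def by (intro add_mono) auto
    finally show "l2norm M (\<lambda>x. T f x - Op M k f x) \<le> (CT + CS) * l2norm M f" by (simp add: algebra_simps)
  qed
  have hom: "l2norm M (A (\<lambda>y. c * f y)) = cmod c * l2norm M (A f)" if f: "sq_int M f" for f c
  proof -
    have "l2norm M (A (\<lambda>y. c * f y)) = l2norm M (\<lambda>x. c * A f x)"
    proof (rule l2norm_AE_cong)
      show "A (\<lambda>y. c * f y) \<in> borel_measurable M" unfolding A_def
        using sq_int_diff[OF bop_sq[OF bT sq_int_cmult[OF f]] CS(2)[OF sq_int_cmult[OF f]]] by (simp add: sq_int_def)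
      show "(\<lambda>x. c * A f x) \<in> borel_measurable M" unfolding A_def
        using sq_int_cmult[OF sq_int_diff[OF bop_sq[OF bT f] CS(2)[OF f]]] by (simp add: sq_int_def)
      show "AE x in M. A (\<lambda>y. c * f y) x = c * A f x"
        using bop_hom[OF bT f, of c] by eventually_elim (simp add: A_def Op_hom algebra_simps)
    qed
    then show ?thesis by (simp add: l2norm_cmult)
  qed
  show ?thesis
  proof (rule that[OF kr])
    fix f assume f: "sq_int M f"
    have "l2norm M (A f) \<le> opnorm M A * l2norm M f"
      by (rule opnorm_homog[OF opb_bdd[OF opbA] hom f])
    also have "\<dots> \<le> e * l2norm M f" using on unfolding A_def by (intro mult_right_mono) auto
    finally show "l2norm M (\<lambda>x. T f x - Op M k f x) \<le> e * l2norm M f" unfolding A_def .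
  qed
qed

end

locale kernT = kern M k K r0 for M :: "'a::metric_space measure" and k K r0 +
  fixes T :: "'a op" and e :: real
  assumes bT: "bounded_op M T" and e: "e > 0"
    and app: "\<And>f. sq_int M f \<Longrightarrow> l2norm M (\<lambda>x. T f x - Op M k f x) \<le> e * l2norm M f"
begin

lemma Op_sq: "sq_int M f \<Longrightarrow> sq_int M (Op M k f)"
  using Op_bounded by blast

lemma TS_sq: "sq_int M f \<Longrightarrow> sq_int M (\<lambda>x. T f x - Op M k f x)"
  by (rule sq_int_diff[OF bop_sq[OF bT] Op_sq])

lemma loc_bound:
  assumes g: "sq_int M g" and F: "F \<in> sets M" and B: "B \<in> sets M"
    and z: "\<And>z. z \<notin> B \<Longrightarrow> Op M k g z = 0"
    and on: "opnorm M (\<lambda>f. mult_ind B (T f)) \<le> e"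
  shows "l2norm M (mult_ind F (Op M k g)) \<le> 2 * e * l2norm M g"
proof -
  have "l2norm M (mult_ind F (Op M k g)) \<le> l2norm M (mult_ind B (Op M k g))"
  proof (rule l2norm_mono)
    show "sq_int M (mult_ind B (Op M k g))" by (rule sq_int_mult_ind[OF B Op_sq[OF g]])
    show "mult_ind F (Op M k g) \<in> borel_measurable M" by (rule mult_ind_meas[OF F Op_meas[OF g]])
    fix x show "cmod (mult_ind F (Op M k g) x) \<le> cmod (mult_ind B (Op M k g) x)"
      using z[of x] by (cases "x \<in> B") (auto simp: mult_ind_def indicator_def)
  qed
  also have "mult_ind B (Op M k g) = (\<lambda>x. mult_ind B (T g) x - mult_ind B (\<lambda>x. T g x - Op M k g x) x)"
    by (auto simp: mult_ind_def algebra_simps)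
  also have "l2norm M \<dots> \<le> l2norm M (mult_ind B (T g)) + l2norm M (mult_ind B (\<lambda>x. T g x - Op M k g x))"
    by (rule l2norm_triangle_diff[OF sq_int_mult_ind[OF B bop_sq[OF bT g]] sq_int_mult_ind[OF B TS_sq[OF g]]])
  also have "\<dots> \<le> e * l2norm M g + e * l2norm M g"
  proof (rule add_mono)
    have "l2norm M (mult_ind B (T g)) \<le> opnorm M (\<lambda>f. mult_ind B (T f)) * l2norm M g"
      by (rule L_bound[OF bT B g])
    also have "\<dots> \<le> e * l2norm M g" by (intro mult_right_mono on) auto
    finally show "l2norm M (mult_ind B (T g)) \<le> e * l2norm M g" .
    have "l2norm M (mult_ind B (\<lambda>x. T g x - Op M k g x)) \<le> l2norm M (\<lambda>x. T g x - Op M k g x)"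
      by (rule l2norm_mult_ind_le[OF B TS_sq[OF g]])
    also have "\<dots> \<le> e * l2norm M g" by (rule app[OF g])
    finally show "l2norm M (mult_ind B (\<lambda>x. T g x - Op M k g x)) \<le> e * l2norm M g" .
  qed
  finally show ?thesis by simp
qed

lemma ii_to_iii_pt:
  assumes on: "opnorm M (\<lambda>f. T (mult_ind (cball x (r + r0)) f)) < e"
  shows "opnorm M (\<lambda>f. mult_ind (cball x r) (T f)) \<le> 3 * e"
proof (rule opnorm_least)
  fix f assume f: "sq_int M f" "l2norm M f \<le> 1"
  define B where "B = cball x r"
  define B' where "B' = cball x (r + r0)"
  define g where "g = mult_ind B' f"
  have g: "sq_int M g" unfolding g_def B'_def by (rule sq_int_mult_ind[OF cball_M f(1)])
  have gn: "l2norm M g \<le> 1" using l2norm_mult_ind_le[OF cball_M f(1)] f(2) unfolding g_def B'_def by (metis order_trans)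
  have eq: "mult_ind B (T f) = (\<lambda>z. mult_ind B (\<lambda>z. T f z - Op M k f z) z + mult_ind B (\<lambda>z. T g z - (T g z - Op M k g z)) z)"
  proof
    fix z
    show "mult_ind B (T f) z = mult_ind B (\<lambda>z. T f z - Op M k f z) z + mult_ind B (\<lambda>z. T g z - (T g z - Op M k g z)) z"
    proof (cases "z \<in> B")
      case True
      then have "Op M k f z = Op M k g z" unfolding g_def B_def B'_def by (rule Op_loc)
      then show ?thesis using True by (simp add: mult_ind_def)
    qed (simp add: mult_ind_def)
  qed
  have "l2norm M (mult_ind B (T f)) \<le> l2norm M (mult_ind B (\<lambda>z. T f z - Op M k f z)) + l2norm M (mult_ind B (\<lambda>z. T g z - (T g z - Op M k g z)))"
    unfolding eq
    by (rule l2norm_triangle) (auto intro!: sq_int_mult_ind sq_int_diff TS_sq f g bop_sq[OF bT] Op_sq simp: B_def)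
  also have "\<dots> \<le> e + (e + e)"
  proof (rule add_mono)
    have "l2norm M (mult_ind B (\<lambda>z. T f z - Op M k f z)) \<le> l2norm M (\<lambda>z. T f z - Op M k f z)"
      unfolding B_def by (rule l2norm_mult_ind_le[OF cball_M TS_sq[OF f(1)]])
    also have "\<dots> \<le> e * l2norm M f" by (rule app[OF f(1)])
    also have "\<dots> \<le> e" using f(2) e by (simp add: mult_left_le)
    finally show "l2norm M (mult_ind B (\<lambda>z. T f z - Op M k f z)) \<le> e" .
    have "l2norm M (mult_ind B (\<lambda>z. T g z - (T g z - Op M k g z))) \<le> l2norm M (\<lambda>z. T g z - (T g z - Op M k g z))"
      unfolding B_def by (rule l2norm_mult_ind_le[OF cball_M sq_int_diff[OF bop_sq[OF bT g] TS_sq[OF g]]])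
    also have "\<dots> \<le> l2norm M (T g) + l2norm M (\<lambda>z. T g z - Op M k g z)"
      by (rule l2norm_triangle_diff[OF bop_sq[OF bT g] TS_sq[OF g]])
    also have "\<dots> \<le> e + e"
    proof (rule add_mono)
      have "l2norm M (T g) \<le> opnorm M (\<lambda>f. T (mult_ind B' f)) * l2norm M f"
        unfolding g_def B'_def by (rule R_bound[OF bT cball_M f(1)])
      also have "\<dots> \<le> e * 1"
        using on f(2) opnorm_nonneg[OF R_bdd[OF bT cball_M]] e unfolding B'_def
        by (intro mult_mono) auto
      finally show "l2norm M (T g) \<le> e" by simp
      have "l2norm M (\<lambda>z. T g z - Op M k g z) \<le> e * l2norm M g" by (rule app[OF g])
      also have "\<dots> \<le> e" using gn e by (simp add: mult_left_le)
      finally show "l2norm M (\<lambda>z. T g z - Op M k g z) \<le> e" .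
    qed
    finally show "l2norm M (mult_ind B (\<lambda>z. T g z - (T g z - Op M k g z))) \<le> e + e" .
  qed
  finally show "l2norm M (mult_ind (cball x r) (T f)) \<le> 3 * e" unfolding B_def by simp
qed

lemma iii_to_ii_pt:
  assumes on: "opnorm M (\<lambda>f. mult_ind (cball x (r + r0)) (T f)) < e"
  shows "opnorm M (\<lambda>f. T (mult_ind (cball x r) f)) \<le> 3 * e"
proof (rule opnorm_least)
  fix f assume f: "sq_int M f" "l2norm M f \<le> 1"
  define B' where "B' = cball x (r + r0)"
  define g where "g = mult_ind (cball x r) f"
  have g: "sq_int M g" unfolding g_def by (rule sq_int_mult_ind[OF cball_M f(1)])
  have gn: "l2norm M g \<le> 1" using l2norm_mult_ind_le[OF cball_M f(1)] f(2) unfolding g_def by (metis order_trans)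
  have z: "Op M k g z = 0" if "z \<notin> B'" for z
    using that unfolding B'_def g_def by (intro Op_supp) (auto simp: mult_ind_def)
  have eq: "T g = (\<lambda>z. (T g z - Op M k g z) + mult_ind B' (Op M k g) z)"
  proof
    fix z show "T g z = (T g z - Op M k g z) + mult_ind B' (Op M k g) z"
      using z[of z] by (cases "z \<in> B'") (auto simp: mult_ind_def)
  qed
  have "l2norm M (T g) \<le> l2norm M (\<lambda>z. T g z - Op M k g z) + l2norm M (mult_ind B' (Op M k g))"
    by (subst eq, rule l2norm_triangle[OF TS_sq[OF g] sq_int_mult_ind[OF _ Op_sq[OF g]]]) (simp add: B'_def)
  also have "\<dots> \<le> e + 2 * e"
  proof (rule add_mono)
    have "l2norm M (\<lambda>z. T g z - Op M k g z) \<le> e * l2norm M g" by (rule app[OF g])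
    also have "\<dots> \<le> e" using gn e by (simp add: mult_left_le)
    finally show "l2norm M (\<lambda>z. T g z - Op M k g z) \<le> e" .
    have "l2norm M (mult_ind B' (Op M k g)) \<le> 2 * e * l2norm M g"
    proof (rule loc_bound[OF g])
      show "B' \<in> sets M" unfolding B'_def by simp
      show "opnorm M (\<lambda>f. mult_ind B' (T f)) \<le> e" using on unfolding B'_def by simp
    qed (use z B'_def in auto)
    also have "\<dots> \<le> 2 * e" using gn e by (simp add: mult_left_le)
    finally show "l2norm M (mult_ind B' (Op M k g)) \<le> 2 * e" .
  qed
  finally show "l2norm M (T (mult_ind (cball x r) f)) \<le> 3 * e" unfolding g_def by simp
qed

end


context kernT begin

lemma key_estimate:
  fixes \<psi> :: "nat \<Rightarrow> 'a \<Rightarrow> real"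
  assumes F: "F \<in> sets M"
    and \<psi>m: "\<And>j. \<psi> j \<in> borel_measurable M" and \<psi>b: "\<And>j y. 0 \<le> \<psi> j y" "\<And>j y. \<psi> j y \<le> 1"
    and \<psi>1: "\<And>y. (\<Sum>j. ennreal ((\<psi> j y)\<^sup>2)) = 1"
    and \<eta>: "\<And>x y. dist x y \<le> r0 \<Longrightarrow> (\<Sum>j. ennreal ((\<psi> j x - \<psi> j y)\<^sup>2)) \<le> ennreal \<eta>" "\<eta> \<ge> 0"
    and C1: "\<And>x. emeasure M (cball x r0) \<le> ennreal C1" "C1 \<ge> 0"
    and C2: "\<And>(g::'a \<Rightarrow> ennreal) (h::'a \<Rightarrow> ennreal) (a::ennreal). g \<in> borel_measurable M \<Longrightarrow>
      (\<And>x. h x \<le> a * (\<integral>\<^sup>+y. indicator (cball x r0) y * g y \<partial>M)) \<Longrightarrow>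
      (\<integral>\<^sup>+x. h x \<partial>M) \<le> a * ennreal C2 * (\<integral>\<^sup>+y. g y \<partial>M)" "C2 \<ge> 0"
    and small: "C1 * K\<^sup>2 * \<eta> * C2 \<le> e\<^sup>2"
    and jb: "\<And>j f. sq_int M f \<Longrightarrow> l2norm M (mult_ind F (Op M k (\<lambda>y. complex_of_real (\<psi> j y) * f y)))
                \<le> 2 * e * l2norm M (\<lambda>y. complex_of_real (\<psi> j y) * f y)"
    and f: "sq_int M f"
  shows "(l2norm M (mult_ind F (Op M k f)))\<^sup>2 \<le> 10 * e\<^sup>2 * (l2norm M f)\<^sup>2"
proof -
  have fm[measurable]: "f \<in> borel_measurable M" using f by (simp add: sq_int_def)
  have [measurable]: "\<psi> j \<in> borel_measurable M" for j by (rule \<psi>m)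
  have [measurable]: "F \<in> sets M" by (rule F)
  define g where "g j y = complex_of_real (\<psi> j y) * f y" for j y
  have gsq: "sq_int M (g j)" for j unfolding g_def by (rule sq_int_rmult[OF f \<psi>m]) (use \<psi>b in auto)
  have Opf[measurable]: "Op M k f \<in> borel_measurable M" by (rule Op_meas[OF f])
  have Opg[measurable]: "Op M k (g j) \<in> borel_measurable M" for j by (rule Op_meas[OF gsq])
  define u where "u = mult_ind F (Op M k f)"
  have usq: "sq_int M u" unfolding u_def by (rule sq_int_mult_ind[OF F Op_sq[OF f]])
  define A where "A j z = ennreal ((cmod (mult_ind F (Op M k (g j)) z))\<^sup>2)" for j z
  define Bc where "Bc j z = ennreal ((cmod (complex_of_real (\<psi> j z) * Op M k f z - Op M k (g j) z))\<^sup>2)" for j z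
  have Am[measurable]: "A j \<in> borel_measurable M" for j unfolding A_def mult_ind_def by measurable
  have Bm[measurable]: "Bc j \<in> borel_measurable M" for j unfolding Bc_def by measurable
  have pw: "ennreal ((\<psi> j z)\<^sup>2) * ennreal ((cmod (u z))\<^sup>2) \<le> 2 * A j z + 2 * Bc j z" for j z
  proof -
    define a where "a = cmod (mult_ind F (Op M k (g j)) z)"
    define c where "c = cmod (complex_of_real (\<psi> j z) * Op M k f z - Op M k (g j) z)"
    have "complex_of_real (\<psi> j z) * u z = mult_ind F (Op M k (g j)) z +
        indicator F z * (complex_of_real (\<psi> j z) * Op M k f z - Op M k (g j) z)"
      unfolding u_def mult_ind_def by (simp add: algebra_simps)
    then have "cmod (complex_of_real (\<psi> j z) * u z) \<le> a + cmod (indicator F z * (complex_of_real (\<psi> j z) * Op M k f z - Op M k (g j) z))"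
      unfolding a_def by (metis norm_triangle_ineq)
    also have "cmod (indicator F z * (complex_of_real (\<psi> j z) * Op M k f z - Op M k (g j) z)) \<le> c"
      unfolding c_def by (simp add: indicator_def norm_mult)
    finally have le: "cmod (complex_of_real (\<psi> j z) * u z) \<le> a + c" by simp
    have "(\<psi> j z)\<^sup>2 * (cmod (u z))\<^sup>2 = (cmod (complex_of_real (\<psi> j z) * u z))\<^sup>2"
      by (simp add: norm_mult power_mult_distrib)
    also have "\<dots> \<le> (a + c)\<^sup>2" using le by (intro power_mono) auto
    also have "\<dots> \<le> 2 * a\<^sup>2 + 2 * c\<^sup>2" by (rule sq_sum_le)
    finally have "ennreal ((\<psi> j z)\<^sup>2 * (cmod (u z))\<^sup>2) \<le> ennreal (2 * a\<^sup>2 + 2 * c\<^sup>2)" by (rule ennreal_leI)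
    moreover have "ennreal (2 * a\<^sup>2 + 2 * c\<^sup>2) = 2 * ennreal (a\<^sup>2) + 2 * ennreal (c\<^sup>2)"
      by (simp add: ennreal_mult)
    ultimately show ?thesis unfolding A_def Bc_def a_def c_def
      by (simp add: ennreal_mult'')
  qed
  have "ennreal ((l2norm M u)\<^sup>2) = (\<integral>\<^sup>+z. ennreal ((cmod (u z))\<^sup>2) \<partial>M)" by (rule l2norm_nn[OF usq])
  also have "\<dots> = (\<integral>\<^sup>+z. (\<Sum>j. ennreal ((\<psi> j z)\<^sup>2) * ennreal ((cmod (u z))\<^sup>2)) \<partial>M)"
    by (rule nn_integral_cong) (simp add: \<psi>1)
  also have "\<dots> \<le> (\<integral>\<^sup>+z. 2 * (\<Sum>j. A j z) + 2 * (\<Sum>j. Bc j z) \<partial>M)"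
  proof (rule nn_integral_mono)
    fix z
    have "(\<Sum>j. ennreal ((\<psi> j z)\<^sup>2) * ennreal ((cmod (u z))\<^sup>2)) \<le> (\<Sum>j. 2 * A j z + 2 * Bc j z)"
      by (intro suminf_le summableI pw)
    also have "\<dots> = 2 * (\<Sum>j. A j z) + 2 * (\<Sum>j. Bc j z)"
      by (subst suminf_add[symmetric]) auto
    finally show "(\<Sum>j. ennreal ((\<psi> j z)\<^sup>2) * ennreal ((cmod (u z))\<^sup>2)) \<le> 2 * (\<Sum>j. A j z) + 2 * (\<Sum>j. Bc j z)" .
  qed
  also have "\<dots> = 2 * (\<integral>\<^sup>+z. (\<Sum>j. A j z) \<partial>M) + 2 * (\<integral>\<^sup>+z. (\<Sum>j. Bc j z) \<partial>M)"
    by (subst nn_integral_add) (auto simp: nn_integral_cmult)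
  also have "\<dots> \<le> 2 * ennreal (4 * e\<^sup>2 * (l2norm M f)\<^sup>2) + 2 * ennreal (e\<^sup>2 * (l2norm M f)\<^sup>2)"
  proof (intro add_mono mult_left_mono)
    have "(\<integral>\<^sup>+z. (\<Sum>j. A j z) \<partial>M) = (\<Sum>j. \<integral>\<^sup>+z. A j z \<partial>M)" by (rule nn_integral_suminf) simp
    also have "\<dots> \<le> (\<Sum>j. ennreal (4 * e\<^sup>2) * (\<integral>\<^sup>+z. ennreal ((\<psi> j z)\<^sup>2) * ennreal ((cmod (f z))\<^sup>2) \<partial>M))"
    proof (intro suminf_le summableI)
      fix j
      have "(\<integral>\<^sup>+z. A j z \<partial>M) = ennreal ((l2norm M (mult_ind F (Op M k (g j))))\<^sup>2)"
        unfolding A_def by (rule l2norm_nn[symmetric], rule sq_int_mult_ind[OF F Op_sq[OF gsq]])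
      also have "\<dots> \<le> ennreal ((2 * e * l2norm M (g j))\<^sup>2)"
      proof -
        have geq: "g j = (\<lambda>y. complex_of_real (\<psi> j y) * f y)" by (simp add: g_def fun_eq_iff)
        show ?thesis using jb[OF f, of j] e unfolding geq by (intro ennreal_leI power_mono) auto
      qed
      also have "\<dots> = ennreal (4 * e\<^sup>2) * ennreal ((l2norm M (g j))\<^sup>2)"
        by (simp add: ennreal_mult'' power_mult_distrib)
      also have "ennreal ((l2norm M (g j))\<^sup>2) = (\<integral>\<^sup>+z. ennreal ((\<psi> j z)\<^sup>2) * ennreal ((cmod (f z))\<^sup>2) \<partial>M)"
        unfolding l2norm_nn[OF gsq] g_def by (rule nn_integral_cong) (simp add: norm_mult power_mult_distrib ennreal_mult'')
      finally show "(\<integral>\<^sup>+z. A j z \<partial>M) \<le> ennreal (4 * e\<^sup>2) * (\<integral>\<^sup>+z. ennreal ((\<psi> j z)\<^sup>2) * ennreal ((cmod (f z))\<^sup>2) \<partial>M)" .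
    qed
    also have "\<dots> = ennreal (4 * e\<^sup>2) * (\<integral>\<^sup>+z. (\<Sum>j. ennreal ((\<psi> j z)\<^sup>2) * ennreal ((cmod (f z))\<^sup>2)) \<partial>M)"
      by (subst nn_integral_suminf) auto
    also have "\<dots> = ennreal (4 * e\<^sup>2) * ennreal ((l2norm M f)\<^sup>2)"
      by (simp add: \<psi>1 l2norm_nn[OF f])
    also have "\<dots> = ennreal (4 * e\<^sup>2 * (l2norm M f)\<^sup>2)" by (simp add: ennreal_mult'')
    finally show "(\<integral>\<^sup>+z. (\<Sum>j. A j z) \<partial>M) \<le> ennreal (4 * e\<^sup>2 * (l2norm M f)\<^sup>2)" .
  next
    have "(\<integral>\<^sup>+z. (\<Sum>j. Bc j z) \<partial>M) \<le> ennreal (C1 * K\<^sup>2 * \<eta>) * ennreal C2 * (\<integral>\<^sup>+y. ennreal ((cmod (f y))\<^sup>2) \<partial>M)"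
    proof (rule C2(1))
      show "(\<lambda>y. ennreal ((cmod (f y))\<^sup>2)) \<in> borel_measurable M" by measurable
      fix x
      show "(\<Sum>j. Bc j x) \<le> ennreal (C1 * K\<^sup>2 * \<eta>) * (\<integral>\<^sup>+y. indicator (cball x r0) y * ennreal ((cmod (f y))\<^sup>2) \<partial>M)"
        unfolding Bc_def g_def by (rule comm_pw[OF f C1 \<psi>m \<psi>b \<eta>])
    qed
    also have "\<dots> = ennreal (C1 * K\<^sup>2 * \<eta> * C2 * (l2norm M f)\<^sup>2)"
      using C1(2) C2(2) \<eta>(2) K0 by (simp add: l2norm_nn[OF f] ennreal_mult'' mult.assoc)
    also have "\<dots> \<le> ennreal (e\<^sup>2 * (l2norm M f)\<^sup>2)"
      by (intro ennreal_leI mult_right_mono small) simp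
    finally show "(\<integral>\<^sup>+z. (\<Sum>j. Bc j z) \<partial>M) \<le> ennreal (e\<^sup>2 * (l2norm M f)\<^sup>2)" .
  qed simp_all
  also have "\<dots> = ennreal (10 * e\<^sup>2 * (l2norm M f)\<^sup>2)"
  proof -
    define t where "t = e\<^sup>2 * (l2norm M f)\<^sup>2"
    have t0: "t \<ge> 0" unfolding t_def by simp
    have m2: "ennreal (2 * x) = 2 * ennreal x" if "x \<ge> 0" for x :: real
      using that by (simp add: ennreal_mult)
    have "2 * ennreal (4 * t) + 2 * ennreal t = ennreal (2 * (4 * t)) + ennreal (2 * t)"
    proof -
      have a: "ennreal (2 * (4 * t)) = 2 * ennreal (4 * t)" by (rule m2) (use t0 in simp)
      have b: "ennreal (2 * t) = 2 * ennreal t" by (rule m2[OF t0])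
      show ?thesis by (simp only: a b)
    qed
    also have "\<dots> = ennreal (2 * (4 * t) + 2 * t)" using t0 by (intro ennreal_plus[symmetric]) simp_all
    also have "2 * (4 * t) + 2 * t = 10 * t" by simp
    finally show ?thesis unfolding t_def by (simp add: mult.assoc)
  qed
  finally have "ennreal ((l2norm M u)\<^sup>2) \<le> ennreal (10 * e\<^sup>2 * (l2norm M f)\<^sup>2)" .
  then show ?thesis unfolding u_def by (subst (asm) ennreal_le_iff) auto
qed

end


context kernT begin

lemma construct:
  assumes H: "\<forall>r>0. ((\<lambda>x. opnorm M (\<lambda>f. mult_ind (cball x r) (T f))) \<longlongrightarrow> 0) \<xi>"
  shows "\<exists>F. F \<in> sets M \<and> F \<in> co_filter \<xi> \<and> opnorm M (\<lambda>f. mult_ind F (T f)) \<le> 5 * e"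
proof -
  obtain C1 where C1: "C1 \<ge> 0" "\<And>x. emeasure M (cball x r0) \<le> ennreal C1" using unif_ball[OF r0] by blast
  obtain C2 where C2: "C2 \<ge> 0" "\<And>(g::'a \<Rightarrow> ennreal) (h::'a \<Rightarrow> ennreal) (a::ennreal). g \<in> borel_measurable M \<Longrightarrow>
      (\<And>x. h x \<le> a * (\<integral>\<^sup>+y. indicator (cball x r0) y * g y \<partial>M)) \<Longrightarrow>
      (\<integral>\<^sup>+x. h x \<partial>M) \<le> a * ennreal C2 * (\<integral>\<^sup>+y. g y \<partial>M)"
    using ball_integral'[OF r0] by blast
  define P where "P = C1 * K\<^sup>2 * C2"
  have P0: "P \<ge> 0" unfolding P_def using C1(1) C2(1) by simp
  define \<epsilon>' where "\<epsilon>' = e / sqrt (P + 1)"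
  have \<epsilon>': "\<epsilon>' > 0" unfolding \<epsilon>'_def using e P0 by simp
  have small: "C1 * K\<^sup>2 * \<epsilon>'\<^sup>2 * C2 \<le> e\<^sup>2"
  proof -
    have "C1 * K\<^sup>2 * \<epsilon>'\<^sup>2 * C2 = P * e\<^sup>2 / (P + 1)"
      unfolding \<epsilon>'_def P_def using P0 by (simp add: power_divide P_def)
    also have "\<dots> \<le> e\<^sup>2" using P0 by (simp add: divide_le_eq algebra_simps)
    finally show ?thesis .
  qed
  have r01: "r0 + 1 > 0" using r0 by simp
  obtain \<psi> :: "nat \<Rightarrow> 'a \<Rightarrow> real" and d :: "nat \<Rightarrow> 'a" and s :: real where
    \<psi>m: "\<And>j. \<psi> j \<in> borel_measurable M" and \<psi>b: "\<And>j y. 0 \<le> \<psi> j y" "\<And>j y. \<psi> j y \<le> 1"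
    and \<psi>1: "\<And>y. (\<Sum>j. ennreal ((\<psi> j y)\<^sup>2)) = 1"
    and \<psi>c: "\<And>x y. dist x y < r0 + 1 \<Longrightarrow> (\<Sum>j. ennreal ((\<psi> j x - \<psi> j y)\<^sup>2)) \<le> ennreal (\<epsilon>'\<^sup>2)"
    and \<psi>s: "\<And>j y. \<psi> j y \<noteq> 0 \<Longrightarrow> dist y (d j) \<le> s"
    by (rule pou[OF \<epsilon>' r01]) (rule that)
  have \<eta>: "\<And>x y. dist x y \<le> r0 \<Longrightarrow> (\<Sum>j. ennreal ((\<psi> j x - \<psi> j y)\<^sup>2)) \<le> ennreal (\<epsilon>'\<^sup>2)"
    using \<psi>c by simp
  define R where "R = 2 * \<bar>s\<bar> + 2 * r0 + 1"
  have R0: "R > 0" unfolding R_def using r0 by simp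
  define G where "G = {x. opnorm M (\<lambda>f. mult_ind (cball x R) (T f)) < e}"
  define F where "F = (\<Union>x\<in>G. ball x 1)"
  have FM: "F \<in> sets M" unfolding F_def by (intro open_M) auto
  have Fco: "F \<in> co_filter \<xi>" unfolding co_filter_def
  proof (intro CollectI allI impI)
    fix r' :: real assume r': "r' > 0"
    have "((\<lambda>x. opnorm M (\<lambda>f. mult_ind (cball x (R + r' + 1)) (T f))) \<longlongrightarrow> 0) \<xi>"
      using H R0 r' by simp
    then have ev: "eventually (\<lambda>x. dist (opnorm M (\<lambda>f. mult_ind (cball x (R + r' + 1)) (T f))) 0 < e) \<xi>"
      using e unfolding tendsto_iff by blast
    show "eventually (\<lambda>x. x \<in> inner_set r' F) \<xi>"
      using ev
    proof eventually_elim
      case (elim x)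
      then have lt: "opnorm M (\<lambda>f. mult_ind (cball x (R + r' + 1)) (T f)) < e" by (simp add: dist_real_def)
      show ?case unfolding inner_set_def
      proof (intro CollectI exI[of _ "r' + 1"] conjI allI impI)
        show "r' + 1 > r'" by simp
        fix y assume yF: "y \<notin> F"
        show "r' + 1 \<le> dist x y"
        proof (rule ccontr)
          assume "\<not> r' + 1 \<le> dist x y"
          then have "dist x y < r' + 1" by simp
          then have "cball y R \<subseteq> cball x (R + r' + 1)"
          proof -
            assume xy: "dist x y < r' + 1"
            show ?thesis
            proof
              fix z assume "z \<in> cball y R"
              then have "dist y z \<le> R" by simp
              moreover have "dist x z \<le> dist x y + dist y z" by (rule dist_triangle)
              ultimately show "z \<in> cball x (R + r' + 1)" using xy by simp
            qed
          qed
          then have "opnorm M (\<lambda>f. mult_ind (cball y R) (T f)) \<le> opnorm M (\<lambda>f. mult_ind (cball x (R + r' + 1)) (T f))"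
            by (intro L_mono[OF bT]) auto
          then have "y \<in> G" unfolding G_def using lt by simp
          then have "y \<in> F" unfolding F_def by force
          then show False using yF by simp
        qed
      qed
    qed
  qed
  have jb: "l2norm M (mult_ind F (Op M k (\<lambda>y. complex_of_real (\<psi> j y) * f y)))
                \<le> 2 * e * l2norm M (\<lambda>y. complex_of_real (\<psi> j y) * f y)" if f: "sq_int M f" for j f
  proof -
    define g where "g = (\<lambda>y. complex_of_real (\<psi> j y) * f y)"
    have g: "sq_int M g" unfolding g_def by (rule sq_int_rmult[OF f \<psi>m]) (use \<psi>b in auto)
    have g0: "g y = 0" if "y \<notin> cball (d j) s" for y
    proof -
      have "\<psi> j y = 0" using \<psi>s[of j y] that by (auto simp: dist_commute)
      then show ?thesis unfolding g_def by simp
    qed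
    have Og0: "Op M k g z = 0" if "z \<notin> cball (d j) (s + r0)" for z
      by (rule Op_supp[OF g0 that])
    show ?thesis
    proof (cases "\<exists>y\<in>F. y \<in> cball (d j) (s + r0)")
      case True
      then obtain y where y: "y \<in> F" "y \<in> cball (d j) (s + r0)" by blast
      then obtain x where x: "x \<in> G" "dist x y < 1" unfolding F_def by auto
      have Oz: "Op M k g z = 0" if "z \<notin> cball x R" for z
      proof (rule Og0, rule notI)
        assume z: "z \<in> cball (d j) (s + r0)"
        have "dist x z \<le> dist x y + dist y (d j) + dist (d j) z"
          using dist_triangle[of x z y] dist_triangle[of y z "d j"] by simp
        also have "\<dots> \<le> R"
        proof -
          have a: "dist y (d j) \<le> s + r0" using y(2) by (simp add: dist_commute)
          have b: "dist (d j) z \<le> s + r0" using z by simp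
          have c: "s \<le> \<bar>s\<bar>" by simp
          show ?thesis using x(2) a b c unfolding R_def by linarith
        qed
        finally show False using that by simp
      qed
      have on: "opnorm M (\<lambda>f. mult_ind (cball x R) (T f)) \<le> e" using x(1) unfolding G_def by simp
      show ?thesis unfolding g_def[symmetric] by (rule loc_bound[OF g FM cball_M Oz on])
    next
      case False
      have "mult_ind F (Op M k g) = (\<lambda>z. 0)"
      proof
        fix z show "mult_ind F (Op M k g) z = 0"
          using False Og0[of z] by (cases "z \<in> F") (auto simp: mult_ind_def)
      qed
      then show ?thesis unfolding g_def[symmetric] using e by simp
    qed
  qed
  have opn: "opnorm M (\<lambda>f. mult_ind F (T f)) \<le> 5 * e"
  proof (rule opnorm_least)
    fix f assume f: "sq_int M f" "l2norm M f \<le> 1"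
    have ke: "(l2norm M (mult_ind F (Op M k f)))\<^sup>2 \<le> 10 * e\<^sup>2 * (l2norm M f)\<^sup>2"
      by (rule key_estimate[OF FM \<psi>m \<psi>b \<psi>1 \<eta> _ C1(2,1) C2(2,1) small jb f(1)]) (auto intro: jb)
    have n1: "(l2norm M f)\<^sup>2 \<le> 1\<^sup>2" by (rule power_mono) (use f(2) in auto)
    have e2: "0 \<le> e\<^sup>2" by simp
    have n2: "10 * e\<^sup>2 * (l2norm M f)\<^sup>2 \<le> 10 * e\<^sup>2"
      using mult_left_mono[OF n1, of "10 * e\<^sup>2"] e2 by simp
    have n3: "(4 * e)\<^sup>2 = 16 * e\<^sup>2" by (simp add: power_mult_distrib)
    have sq4: "(l2norm M (mult_ind F (Op M k f)))\<^sup>2 \<le> (4 * e)\<^sup>2"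
      using ke n2 n3 e2 by linarith
    have e4: "0 \<le> 4 * e" using e by simp
    have k4: "l2norm M (mult_ind F (Op M k f)) \<le> 4 * e" by (rule power2_le_imp_le[OF sq4 e4])
    have eq: "mult_ind F (T f) = (\<lambda>z. mult_ind F (\<lambda>z. T f z - Op M k f z) z + mult_ind F (Op M k f) z)"
      by (auto simp: mult_ind_def algebra_simps)
    have "l2norm M (mult_ind F (T f)) \<le> l2norm M (mult_ind F (\<lambda>z. T f z - Op M k f z)) + l2norm M (mult_ind F (Op M k f))"
      unfolding eq by (rule l2norm_triangle[OF sq_int_mult_ind[OF FM TS_sq[OF f(1)]] sq_int_mult_ind[OF FM Op_sq[OF f(1)]]])
    also have "\<dots> \<le> e + 4 * e"
    proof (rule add_mono[OF _ k4])
      have "l2norm M (mult_ind F (\<lambda>z. T f z - Op M k f z)) \<le> l2norm M (\<lambda>z. T f z - Op M k f z)"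
        by (rule l2norm_mult_ind_le[OF FM TS_sq[OF f(1)]])
      also have "\<dots> \<le> e * l2norm M f" by (rule app[OF f(1)])
      also have "\<dots> \<le> e" using f(2) e by (simp add: mult_left_le)
      finally show "l2norm M (mult_ind F (\<lambda>z. T f z - Op M k f z)) \<le> e" .
    qed
    finally show "l2norm M (mult_ind F (T f)) \<le> 5 * e" by simp
  qed
  show ?thesis by (intro exI[of _ F] conjI FM Fco opn)
qed

end


lemma UNIV_co: "UNIV \<in> co_filter \<xi>"
  unfolding co_filter_def inner_set_def
proof (intro CollectI allI impI)
  fix r :: real assume "r > 0"
  show "eventually (\<lambda>x. x \<in> {x. \<exists>\<delta>>r. \<forall>y. y \<notin> UNIV \<longrightarrow> \<delta> \<le> dist x y}) \<xi>"
    by (rule always_eventually) (auto intro!: exI[of _ "r + 1"])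
qed

lemma inner_set_cball: "x \<in> inner_set r F \<Longrightarrow> cball x r \<subseteq> F"
  unfolding inner_set_def
proof
  fix y assume x: "x \<in> {x. \<exists>\<delta>>r. \<forall>y. y \<notin> F \<longrightarrow> \<delta> \<le> dist x y}" and y: "y \<in> cball x r"
  obtain \<delta> where "\<delta> > r" "\<forall>y. y \<notin> F \<longrightarrow> \<delta> \<le> dist x y" using x by blast
  then show "y \<in> F" using y by (meson linorder_not_le mem_cball order_le_less_trans)
qed

theorem theorem5p9:
  fixes M :: "'a::metric_space measure" and \<xi> :: "'a filter" and T :: "'a op"
  assumes "class_A M"
    and "finer_than_frechet \<xi>"
    and "in_E M T"
  shows "(T \<in> J_ideal M (co_filter \<xi>) \<longleftrightarrow>
            (\<forall>r>0. ((\<lambda>x. opnorm M (\<lambda>f. T (mult_ind (cball x r) f))) \<longlongrightarrow> 0) \<xi>))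
       \<and> ((\<forall>r>0. ((\<lambda>x. opnorm M (\<lambda>f. T (mult_ind (cball x r) f))) \<longlongrightarrow> 0) \<xi>) \<longleftrightarrow>
            (\<forall>r>0. ((\<lambda>x. opnorm M (\<lambda>f. mult_ind (cball x r) (T f))) \<longlongrightarrow> 0) \<xi>))"
proof -
  interpret cA M by (rule cA.intro[OF assms(1)])
  have bT: "bounded_op M T" using assms(3) unfolding in_E_def by blast
  have ii_iii: "\<forall>r>0. ((\<lambda>x. opnorm M (\<lambda>f. mult_ind (cball x r) (T f))) \<longlongrightarrow> 0) \<xi>"
    if H: "\<forall>r>0. ((\<lambda>x. opnorm M (\<lambda>f. T (mult_ind (cball x r) f))) \<longlongrightarrow> 0) \<xi>"
  proof (intro allI impI)
    fix r :: real assume r: "r > 0"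
    show "((\<lambda>x. opnorm M (\<lambda>f. mult_ind (cball x r) (T f))) \<longlongrightarrow> 0) \<xi>"
      unfolding tendsto_iff
    proof (intro allI impI)
      fix \<epsilon> :: real assume \<epsilon>: "\<epsilon> > 0"
      define e where "e = \<epsilon> / 4"
      have e0: "e > 0" unfolding e_def using \<epsilon> by simp
      obtain k K r0 where kr: "kern M k K r0"
        and app: "\<And>f. sq_int M f \<Longrightarrow> l2norm M (\<lambda>x. T f x - Op M k f x) \<le> e * l2norm M f"
        by (rule approx[OF assms(3) e0]) (rule that)
      interpret kernT M k K r0 T e
        by (rule kernT.intro[OF kr]) (rule kernT_axioms.intro[OF bT e0 app])
      have "((\<lambda>x. opnorm M (\<lambda>f. T (mult_ind (cball x (r + r0)) f))) \<longlongrightarrow> 0) \<xi>"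
        using H r r0 by simp
      then have ev: "eventually (\<lambda>x. dist (opnorm M (\<lambda>f. T (mult_ind (cball x (r + r0)) f))) 0 < e) \<xi>"
        using e0 unfolding tendsto_iff by blast
      show "eventually (\<lambda>x. dist (opnorm M (\<lambda>f. mult_ind (cball x r) (T f))) 0 < \<epsilon>) \<xi>"
        using ev
      proof eventually_elim
        case (elim x)
        then have "opnorm M (\<lambda>f. T (mult_ind (cball x (r + r0)) f)) < e" by (simp add: dist_real_def)
        then have a: "opnorm M (\<lambda>f. mult_ind (cball x r) (T f)) \<le> 3 * e" by (rule ii_to_iii_pt)
        have b: "0 \<le> opnorm M (\<lambda>f. mult_ind (cball x r) (T f))" by (rule opnorm_nonneg[OF L_bdd[OF bT cball_M]])
        show ?case using a b \<epsilon> unfolding e_def by (simp add: dist_real_def)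
      qed
    qed
  qed
  have iii_ii: "\<forall>r>0. ((\<lambda>x. opnorm M (\<lambda>f. T (mult_ind (cball x r) f))) \<longlongrightarrow> 0) \<xi>"
    if H: "\<forall>r>0. ((\<lambda>x. opnorm M (\<lambda>f. mult_ind (cball x r) (T f))) \<longlongrightarrow> 0) \<xi>"
  proof (intro allI impI)
    fix r :: real assume r: "r > 0"
    show "((\<lambda>x. opnorm M (\<lambda>f. T (mult_ind (cball x r) f))) \<longlongrightarrow> 0) \<xi>"
      unfolding tendsto_iff
    proof (intro allI impI)
      fix \<epsilon> :: real assume \<epsilon>: "\<epsilon> > 0"
      define e where "e = \<epsilon> / 4"
      have e0: "e > 0" unfolding e_def using \<epsilon> by simp
      obtain k K r0 where kr: "kern M k K r0"
        and app: "\<And>f. sq_int M f \<Longrightarrow> l2norm M (\<lambda>x. T f x - Op M k f x) \<le> e * l2norm M f"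
        by (rule approx[OF assms(3) e0]) (rule that)
      interpret kernT M k K r0 T e
        by (rule kernT.intro[OF kr]) (rule kernT_axioms.intro[OF bT e0 app])
      have "((\<lambda>x. opnorm M (\<lambda>f. mult_ind (cball x (r + r0)) (T f))) \<longlongrightarrow> 0) \<xi>"
        using H r r0 by simp
      then have ev: "eventually (\<lambda>x. dist (opnorm M (\<lambda>f. mult_ind (cball x (r + r0)) (T f))) 0 < e) \<xi>"
        using e0 unfolding tendsto_iff by blast
      show "eventually (\<lambda>x. dist (opnorm M (\<lambda>f. T (mult_ind (cball x r) f))) 0 < \<epsilon>) \<xi>"
        using ev
      proof eventually_elim
        case (elim x)
        then have "opnorm M (\<lambda>f. mult_ind (cball x (r + r0)) (T f)) < e" by (simp add: dist_real_def)
        then have a: "opnorm M (\<lambda>f. T (mult_ind (cball x r) f)) \<le> 3 * e" by (rule iii_to_ii_pt)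
        have b: "0 \<le> opnorm M (\<lambda>f. T (mult_ind (cball x r) f))" by (rule opnorm_nonneg[OF R_bdd[OF bT cball_M]])
        show ?case using a b \<epsilon> unfolding e_def by (simp add: dist_real_def)
      qed
    qed
  qed
  define SS where "SS = {F \<in> co_filter \<xi>. F \<in> sets M}"
  define nF where "nF F = opnorm M (\<lambda>f. mult_ind F (T f))" for F
  have SSne: "SS \<noteq> {}" unfolding SS_def using UNIV_co[of \<xi>] by blast
  have nF0: "0 \<le> nF F" if "F \<in> SS" for F
    using that unfolding SS_def nF_def by (intro opnorm_nonneg[OF L_bdd[OF bT]]) auto
  have bddb: "bdd_below (nF ` SS)" using nF0 by (intro bdd_belowI[of _ 0]) auto
  have Jiff: "T \<in> J_ideal M (co_filter \<xi>) \<longleftrightarrow> (INF F\<in>SS. nF F) = 0"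
    unfolding J_ideal_def SS_def nF_def using assms(3) by simp
  have i_iii: "\<forall>r>0. ((\<lambda>x. opnorm M (\<lambda>f. mult_ind (cball x r) (T f))) \<longlongrightarrow> 0) \<xi>"
    if J: "(INF F\<in>SS. nF F) = 0"
  proof (intro allI impI)
    fix r :: real assume r: "r > 0"
    show "((\<lambda>x. opnorm M (\<lambda>f. mult_ind (cball x r) (T f))) \<longlongrightarrow> 0) \<xi>"
      unfolding tendsto_iff
    proof (intro allI impI)
      fix \<epsilon> :: real assume \<epsilon>: "\<epsilon> > 0"
      have "(INF F\<in>SS. nF F) < \<epsilon>" using J \<epsilon> by simp
      then obtain F where F: "F \<in> SS" "nF F < \<epsilon>" using cINF_less_iff[OF SSne bddb] by blast
      have FM: "F \<in> sets M" and Fc: "F \<in> co_filter \<xi>" using F(1) unfolding SS_def by auto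
      have "eventually (\<lambda>x. x \<in> inner_set r F) \<xi>" using Fc r unfolding co_filter_def by blast
      then show "eventually (\<lambda>x. dist (opnorm M (\<lambda>f. mult_ind (cball x r) (T f))) 0 < \<epsilon>) \<xi>"
      proof eventually_elim
        case (elim x)
        have "opnorm M (\<lambda>f. mult_ind (cball x r) (T f)) \<le> nF F"
          unfolding nF_def by (rule L_mono[OF bT cball_M FM inner_set_cball[OF elim]])
        moreover have "0 \<le> opnorm M (\<lambda>f. mult_ind (cball x r) (T f))" by (rule opnorm_nonneg[OF L_bdd[OF bT cball_M]])
        ultimately show ?case using F(2) by (simp add: dist_real_def)
      qed
    qed
  qed
  have iii_i: "(INF F\<in>SS. nF F) = 0"
    if H: "\<forall>r>0. ((\<lambda>x. opnorm M (\<lambda>f. mult_ind (cball x r) (T f))) \<longlongrightarrow> 0) \<xi>"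
  proof (rule antisym)
    show "0 \<le> (INF F\<in>SS. nF F)" by (rule cINF_greatest[OF SSne nF0])
    show "(INF F\<in>SS. nF F) \<le> 0"
    proof (rule ccontr)
      assume "\<not> (INF F\<in>SS. nF F) \<le> 0"
      then have pos: "(INF F\<in>SS. nF F) > 0" by simp
      define e where "e = (INF F\<in>SS. nF F) / 10"
      have e0: "e > 0" unfolding e_def using pos by simp
      obtain k K r0 where kr: "kern M k K r0"
        and app: "\<And>f. sq_int M f \<Longrightarrow> l2norm M (\<lambda>x. T f x - Op M k f x) \<le> e * l2norm M f"
        by (rule approx[OF assms(3) e0]) (rule that)
      interpret kernT M k K r0 T e
        by (rule kernT.intro[OF kr]) (rule kernT_axioms.intro[OF bT e0 app])
      obtain F where F: "F \<in> sets M" "F \<in> co_filter \<xi>" "opnorm M (\<lambda>f. mult_ind F (T f)) \<le> 5 * e"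
        using construct[OF H] by blast
      have "F \<in> SS" unfolding SS_def using F by simp
      then have "(INF F\<in>SS. nF F) \<le> nF F" by (rule cINF_lower[OF bddb])
      also have "\<dots> \<le> 5 * e" using F(3) unfolding nF_def .
      finally show False using pos unfolding e_def by simp
    qed
  qed
  show ?thesis using ii_iii iii_ii i_iii iii_i Jiff by blast
qed


end
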